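(* Let $k$ be a field of characteristic $0$. If $V$ is a finitely generated $\mathrm{FI}\sharp^m$-module, then there is a single character polynomial $P$ such that $\chi_{V_{\mathbf d}}=P$ on $S_{\mathbf d}$ for all $\mathbf d\in\mathbb{N}^m$.
   Context: $\mathrm{FI}\sharp^m$ is the category with objects $\mathbf d\in\mathbb{N}^m$ and morphisms $\mathbf x\to\mathbf y$ given by pairs $(\mathbf z,f)$ with $\mathbf z\subset\mathbf x$ and $f:\mathbf z\hookrightarrow\mathbf y$ an $m$-tuple of injections (partial injections); an $\mathrm{FI}\sharp^m$-module is a functor from it to $k$-vector spaces, finitely generated if generated by finitely many elements. $S_{\mathbf d}=S_{d_1}\times\cdots\times S_{d_m}$. A character polynomial is an element of $k[\{X^{(i)}_j\}]$, where $X^{(i)}_j$ is the class function on $S_{\mathbf d}$ (for every $\mathbf d$) counting the $j$-cycles in the $S_{d_i}$ component. *)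

theory Defs
  imports Complex_Main "HOL-Library.Poly_Mapping" "HOL-Combinatorics.Permutations"
begin

text \<open>Objects: d in N^m, encoded as d :: nat => nat with d i = 0 for i >= m
  (components indexed 0..m-1).  The underlying "m-tuple of finite sets" of d is
  the disjoint union of the sets {0..<d i}, encoded as pairs (i,a) with i<m, a<d i.\<close>

definition objs :: "nat \<Rightarrow> (nat \<Rightarrow> nat) set" where
  "objs m = {d. \<forall>i\<ge>m. d i = 0}"

definition elems :: "nat \<Rightarrow> (nat \<Rightarrow> nat) \<Rightarrow> (nat \<times> nat) set" where
  "elems m d = {(i, a). i < m \<and> a < d i}"

text \<open>A morphism d -> e is a pair (z, f) with z a subset of d and f : z -> e an
  m-tuple of injections; encoded as a partial map whose domain is z, which is
  injective and maps the i-th component of d into the i-th component of e.\<close>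

definition mors :: "nat \<Rightarrow> (nat \<Rightarrow> nat) \<Rightarrow> (nat \<Rightarrow> nat) \<Rightarrow> ((nat \<times> nat) \<rightharpoonup> (nat \<times> nat)) set" where
  "mors m d e = {f. dom f \<subseteq> elems m d \<and> inj_on f (dom f) \<and>
      (\<forall>x\<in>dom f. fst (the (f x)) = fst x \<and> the (f x) \<in> elems m e)}"

definition id_mor :: "nat \<Rightarrow> (nat \<Rightarrow> nat) \<Rightarrow> ((nat \<times> nat) \<rightharpoonup> (nat \<times> nat))" where
  "id_mor m d = (\<lambda>x. if x \<in> elems m d then Some x else None)"

text \<open>An FI#^m-module: a k-vector space V_d for each object d (realised as a
  subspace of an ambient k-vector space 'v), and k-linear maps F d e f : V_d -> V_e
  for each morphism f : d -> e, functorially.\<close>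

definition FIsharp_module ::
  "('k::field \<Rightarrow> 'v::ab_group_add \<Rightarrow> 'v) \<Rightarrow> nat \<Rightarrow> ((nat \<Rightarrow> nat) \<Rightarrow> 'v set) \<Rightarrow>
   ((nat \<Rightarrow> nat) \<Rightarrow> (nat \<Rightarrow> nat) \<Rightarrow> ((nat \<times> nat) \<rightharpoonup> (nat \<times> nat)) \<Rightarrow> 'v \<Rightarrow> 'v) \<Rightarrow> bool" where
  "FIsharp_module scale m V F \<longleftrightarrow>
     vector_space scale \<and>
     (\<forall>d\<in>objs m. module.subspace scale (V d)) \<and>
     (\<forall>d\<in>objs m. \<forall>e\<in>objs m. \<forall>f\<in>mors m d e.
        (\<forall>x\<in>V d. F d e f x \<in> V e) \<and>
        (\<forall>x\<in>V d. \<forall>y\<in>V d. F d e f (x + y) = F d e f x + F d e f y) \<and>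
        (\<forall>c. \<forall>x\<in>V d. F d e f (scale c x) = scale c (F d e f x))) \<and>
     (\<forall>d\<in>objs m. \<forall>x\<in>V d. F d d (id_mor m d) x = x) \<and>
     (\<forall>d\<in>objs m. \<forall>e\<in>objs m. \<forall>c\<in>objs m. \<forall>f\<in>mors m d e. \<forall>g\<in>mors m e c.
        \<forall>x\<in>V d. F d c (g \<circ>\<^sub>m f) x = F e c g (F d e f x))"

definition finitely_generated ::
  "('k::field \<Rightarrow> 'v::ab_group_add \<Rightarrow> 'v) \<Rightarrow> nat \<Rightarrow> ((nat \<Rightarrow> nat) \<Rightarrow> 'v set) \<Rightarrow>
   ((nat \<Rightarrow> nat) \<Rightarrow> (nat \<Rightarrow> nat) \<Rightarrow> ((nat \<times> nat) \<rightharpoonup> (nat \<times> nat)) \<Rightarrow> 'v \<Rightarrow> 'v) \<Rightarrow> bool" where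
  "finitely_generated scale m V F \<longleftrightarrow>
     (\<exists>G. finite G \<and> (\<forall>(d, x)\<in>G. d \<in> objs m \<and> x \<in> V d) \<and>
        (\<forall>e\<in>objs m. V e = module.span scale
            {F d e f x | d x f. (d, x) \<in> G \<and> f \<in> mors m d e}))"

definition trace_on :: "('k::field \<Rightarrow> 'v::ab_group_add \<Rightarrow> 'v) \<Rightarrow> 'v set \<Rightarrow> ('v \<Rightarrow> 'v) \<Rightarrow> 'k" where
  "trace_on scale W phi =
     (let B = (SOME B. B \<subseteq> W \<and> \<not> module.dependent scale B \<and> module.span scale B = W)
      in \<Sum>b\<in>B. module.representation scale B (phi b) b)"

definition Sd :: "nat \<Rightarrow> (nat \<Rightarrow> nat) \<Rightarrow> (nat \<Rightarrow> nat \<Rightarrow> nat) set" where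
  "Sd m d = {\<sigma>. \<forall>i<m. \<sigma> i permutes {..<d i}}"

definition perm_mor :: "nat \<Rightarrow> (nat \<Rightarrow> nat) \<Rightarrow> (nat \<Rightarrow> nat \<Rightarrow> nat) \<Rightarrow> ((nat \<times> nat) \<rightharpoonup> (nat \<times> nat))" where
  "perm_mor m d \<sigma> = (\<lambda>(i, a). if (i, a) \<in> elems m d then Some (i, \<sigma> i a) else None)"

definition character ::
  "('k::field \<Rightarrow> 'v::ab_group_add \<Rightarrow> 'v) \<Rightarrow> nat \<Rightarrow> ((nat \<Rightarrow> nat) \<Rightarrow> 'v set) \<Rightarrow>
   ((nat \<Rightarrow> nat) \<Rightarrow> (nat \<Rightarrow> nat) \<Rightarrow> ((nat \<times> nat) \<rightharpoonup> (nat \<times> nat)) \<Rightarrow> 'v \<Rightarrow> 'v) \<Rightarrow>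
   (nat \<Rightarrow> nat) \<Rightarrow> (nat \<Rightarrow> nat \<Rightarrow> nat) \<Rightarrow> 'k" where
  "character scale m V F d \<sigma> = trace_on scale (V d) (F d d (perm_mor m d \<sigma>))"

definition orbit_of :: "(nat \<Rightarrow> nat) \<Rightarrow> nat \<Rightarrow> nat set" where
  "orbit_of p a = {(p ^^ k) a | k. True}"

definition num_cycles :: "nat \<Rightarrow> (nat \<Rightarrow> nat) \<Rightarrow> nat \<Rightarrow> nat" where
  "num_cycles n p j = card {orbit_of p a | a. a < n \<and> card (orbit_of p a) = j}"

text \<open>X^{(i)}_j as a class function: the number of j-cycles of the i-th component.\<close>

definition X_var :: "(nat \<Rightarrow> nat) \<Rightarrow> (nat \<Rightarrow> nat \<Rightarrow> nat) \<Rightarrow> nat \<times> nat \<Rightarrow> nat" where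
  "X_var d \<sigma> v = num_cycles (d (fst v)) (\<sigma> (fst v)) (snd v)"

text \<open>A character polynomial: an element of k[X^{(i)}_j : 1 \<le> i \<le> m, j \<ge> 1],
  represented as a finitely supported map from monomials (finitely supported
  exponent maps on variables (i,j), i < m, j \<ge> 1) to coefficients.\<close>

definition is_charpoly :: "nat \<Rightarrow> (((nat \<times> nat) \<Rightarrow>\<^sub>0 nat) \<Rightarrow>\<^sub>0 'k::comm_ring_1) \<Rightarrow> bool" where
  "is_charpoly m P \<longleftrightarrow> (\<forall>mn\<in>Poly_Mapping.keys P. Poly_Mapping.keys mn \<subseteq> {(i, j). i < m \<and> 1 \<le> j})"

definition eval_charpoly :: "(((nat \<times> nat) \<Rightarrow>\<^sub>0 nat) \<Rightarrow>\<^sub>0 'k::comm_ring_1) \<Rightarrow>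
    (nat \<Rightarrow> nat) \<Rightarrow> (nat \<Rightarrow> nat \<Rightarrow> nat) \<Rightarrow> 'k" where
  "eval_charpoly P d \<sigma> =
     (\<Sum>mn\<in>Poly_Mapping.keys P. Poly_Mapping.lookup P mn * (\<Prod>v\<in>Poly_Mapping.keys mn. of_nat (X_var d \<sigma> v) ^ Poly_Mapping.lookup mn v))"

end

theory Submission
  imports Defs "HOL-Combinatorics.Orbits"
begin


definition lin_on :: "('k \<Rightarrow> 'v::ab_group_add \<Rightarrow> 'v) \<Rightarrow> 'v set \<Rightarrow> 'v set \<Rightarrow> ('v \<Rightarrow> 'v) \<Rightarrow> bool" where
  "lin_on s W W' f \<longleftrightarrow> (\<forall>x\<in>W. f x \<in> W') \<and> (\<forall>x\<in>W. \<forall>y\<in>W. f (x + y) = f x + f y)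
     \<and> (\<forall>c. \<forall>x\<in>W. f (s c x) = s c (f x))"

definition vbas :: "('k::field \<Rightarrow> 'v::ab_group_add \<Rightarrow> 'v) \<Rightarrow> 'v set \<Rightarrow> 'v set" where
  "vbas s W = (SOME B. B \<subseteq> W \<and> \<not> module.dependent s B \<and> module.span s B = W)"

context vector_space
begin

lemma trace_on_vbas: "trace_on scale W phi = (\<Sum>b\<in>vbas scale W. representation (vbas scale W) (phi b) b)"
  unfolding trace_on_def vbas_def Let_def by simp

lemma vbas_props:
  assumes "finite S" "W = span S"
  shows "vbas scale W \<subseteq> W" "independent (vbas scale W)" "span (vbas scale W) = W" "finite (vbas scale W)"
proof -
  obtain B where B: "B \<subseteq> W" "independent B" "W \<subseteq> span B"
    using basis_exists by blast
  have "span B \<subseteq> W" using B(1) assms(2) span_minimal subspace_span by blast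
  with B have "\<exists>B. B \<subseteq> W \<and> \<not> dependent B \<and> span B = W" by blast
  then have *: "vbas scale W \<subseteq> W \<and> \<not> dependent (vbas scale W) \<and> span (vbas scale W) = W"
    unfolding vbas_def by (rule someI_ex)
  then show "vbas scale W \<subseteq> W" "independent (vbas scale W)" "span (vbas scale W) = W" by auto
  show "finite (vbas scale W)" using independent_span_bound[OF assms(1)] * assms(2) by blast
qed

lemma lin_on_sum:
  assumes "lin_on scale W W' f" "subspace W" "\<And>i. i \<in> I \<Longrightarrow> x i \<in> W"
  shows "f (\<Sum>i\<in>I. x i) = (\<Sum>i\<in>I. f (x i))"
  using assms(3)
proof (induction I rule: infinite_finite_induct)
  case (infinite A) then show ?case
    using assms(1,2) unfolding lin_on_def
    by (metis add_cancel_right_right subspace_0 sum.infinite)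
next
  case empty then show ?case
    using assms(1,2) unfolding lin_on_def
    by (metis add_cancel_right_right subspace_0 sum.empty)
next
  case (insert a A)
  have "(\<Sum>i\<in>A. x i) \<in> W" using insert assms(2) subspace_sum by blast
  then show ?case using insert assms(1) unfolding lin_on_def by simp
qed

lemma lin_on_scale:
  assumes "lin_on scale W W' f" "x \<in> W"
  shows "f (c *s x) = c *s f x"
  using assms unfolding lin_on_def by blast

lemma lin_on_add:
  assumes "lin_on scale W W' f" "x \<in> W" "y \<in> W"
  shows "f (x + y) = f x + f y"
  using assms unfolding lin_on_def by blast

lemma lin_on_in:
  assumes "lin_on scale W W' f" "x \<in> W"
  shows "f x \<in> W'"
  using assms unfolding lin_on_def by blast

lemma lin_on_comp:
  assumes "lin_on scale W W' f" "lin_on scale W' W'' g"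
  shows "lin_on scale W W'' (g \<circ> f)"
  using assms unfolding lin_on_def by auto

lemma trace_cong:
  assumes "finite S" "W = span S" "\<And>x. x \<in> W \<Longrightarrow> f x = g x"
  shows "trace_on scale W f = trace_on scale W g"
  unfolding trace_on_vbas using vbas_props[OF assms(1,2)] assms(3)
  by (intro sum.cong) auto

lemma trace_zero:
  assumes "finite S" "W = span S" "\<And>x. x \<in> W \<Longrightarrow> f x = 0"
  shows "trace_on scale W f = 0"
  unfolding trace_on_vbas using vbas_props[OF assms(1,2)] assms(3)
  by (intro sum.neutral) (auto simp: representation_zero)

lemma trace_sum:
  assumes "finite S" "W = span S" "\<And>i x. i \<in> I \<Longrightarrow> x \<in> W \<Longrightarrow> f i x \<in> W"
  shows "trace_on scale W (\<lambda>x. \<Sum>i\<in>I. f i x) = (\<Sum>i\<in>I. trace_on scale W (f i))"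
proof -
  note B = vbas_props[OF assms(1,2)]
  have "trace_on scale W (\<lambda>x. \<Sum>i\<in>I. f i x) =
     (\<Sum>b\<in>vbas scale W. \<Sum>i\<in>I. representation (vbas scale W) (f i b) b)"
    unfolding trace_on_vbas
    apply (intro sum.cong refl)
    apply (subst representation_sum[OF B(2)])
    using B assms(3) by auto
  also have "\<dots> = (\<Sum>i\<in>I. trace_on scale W (f i))"
    unfolding trace_on_vbas by (rule sum.swap)
  finally show ?thesis .
qed

lemma trace_cyclic:
  assumes S: "finite S" "W = span S" and S': "finite S'" "W' = span S'"
    and A: "lin_on scale W' W A" and Bm: "lin_on scale W W' Bm"
  shows "trace_on scale W (A \<circ> Bm) = trace_on scale W' (Bm \<circ> A)"
proof -
  note B = vbas_props[OF S] and C = vbas_props[OF S']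
  define rB where "rB = representation (vbas scale W)"
  define rC where "rC = representation (vbas scale W')"
  have sW: "subspace W" "subspace W'" using S S' by auto
  have 1: "rB (A (Bm b)) b = (\<Sum>c\<in>vbas scale W'. rC (Bm b) c * rB (A c) b)" if b: "b \<in> vbas scale W" for b
  proof -
    have "Bm b \<in> W'" using Bm b B(1) lin_on_in by blast
    then have "Bm b = (\<Sum>c\<in>vbas scale W'. rC (Bm b) c *s c)"
      unfolding rC_def using C by (intro sum_representation_eq[symmetric]) auto
    then have "A (Bm b) = A (\<Sum>c\<in>vbas scale W'. rC (Bm b) c *s c)" by simp
    also have "\<dots> = (\<Sum>c\<in>vbas scale W'. rC (Bm b) c *s A c)"
      apply (subst lin_on_sum[OF A sW(2)])
      using C(1) sW(2) apply (simp add: subset_iff subspace_scale)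
      apply (intro sum.cong refl lin_on_scale[OF A])
      using C(1) by auto
    finally have "rB (A (Bm b)) = rB (\<Sum>c\<in>vbas scale W'. rC (Bm b) c *s A c)" by simp
    also have "\<dots> = (\<lambda>x. \<Sum>c\<in>vbas scale W'. rB (rC (Bm b) c *s A c) x)"
      unfolding rB_def
      apply (rule representation_sum[OF B(2)])
      using B(3) C(1) lin_on_in[OF A] sW(1) by (auto simp: subspace_scale subset_iff)
    finally show ?thesis
      unfolding rB_def
      apply simp
      apply (intro sum.cong refl)
      apply (subst representation_scale[OF B(2)])
      using B(3) C(1) lin_on_in[OF A] by auto
  qed
  have 2: "rC (Bm (A c)) c = (\<Sum>b\<in>vbas scale W. rB (A c) b * rC (Bm b) c)" if c: "c \<in> vbas scale W'" for c
  proof -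
    have "A c \<in> W" using A c C(1) lin_on_in by blast
    then have "A c = (\<Sum>b\<in>vbas scale W. rB (A c) b *s b)"
      unfolding rB_def using B by (intro sum_representation_eq[symmetric]) auto
    then have "Bm (A c) = Bm (\<Sum>b\<in>vbas scale W. rB (A c) b *s b)" by simp
    also have "\<dots> = (\<Sum>b\<in>vbas scale W. rB (A c) b *s Bm b)"
      apply (subst lin_on_sum[OF Bm sW(1)])
      using B(1) sW(1) apply (simp add: subset_iff subspace_scale)
      apply (intro sum.cong refl lin_on_scale[OF Bm])
      using B(1) by auto
    finally have "rC (Bm (A c)) = rC (\<Sum>b\<in>vbas scale W. rB (A c) b *s Bm b)" by simp
    also have "\<dots> = (\<lambda>x. \<Sum>b\<in>vbas scale W. rC (rB (A c) b *s Bm b) x)"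
      unfolding rC_def
      apply (rule representation_sum[OF C(2)])
      using C(3) B(1) lin_on_in[OF Bm] sW(2) by (auto simp: subspace_scale subset_iff)
    finally show ?thesis
      unfolding rC_def
      apply simp
      apply (intro sum.cong refl)
      apply (subst representation_scale[OF C(2)])
      using C(3) B(1) lin_on_in[OF Bm] by auto
  qed
  have "trace_on scale W (A \<circ> Bm) = (\<Sum>b\<in>vbas scale W. \<Sum>c\<in>vbas scale W'. rC (Bm b) c * rB (A c) b)"
    unfolding trace_on_vbas rB_def[symmetric] using 1 by simp
  also have "\<dots> = (\<Sum>c\<in>vbas scale W'. \<Sum>b\<in>vbas scale W. rB (A c) b * rC (Bm b) c)"
    by (subst sum.swap) (simp add: mult.commute)
  also have "\<dots> = trace_on scale W' (Bm \<circ> A)"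
    unfolding trace_on_vbas rC_def[symmetric] using 2 by simp
  finally show ?thesis .
qed

end



definition pid :: "(nat \<times> nat) set \<Rightarrow> ((nat \<times> nat) \<rightharpoonup> (nat \<times> nat))" where
  "pid U = (\<lambda>x. if x \<in> U then Some x else None)"

lemma elems_Sigma: "elems m d = Sigma {..<m} (\<lambda>i. {..<d i})"
  unfolding elems_def by auto

lemma finite_elems: "finite (elems m d)"
  unfolding elems_Sigma by auto

lemma mors_ran: "f \<in> mors m d e \<Longrightarrow> ran f \<subseteq> elems m e"
proof
  fix b assume f: "f \<in> mors m d e" and "b \<in> ran f"
  then obtain a where a: "f a = Some b" unfolding ran_def by blast
  then have "a \<in> dom f" by blast
  then have "the (f a) \<in> elems m e" using f unfolding mors_def by blast
  then show "b \<in> elems m e" using a by simp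
qed

lemma finite_mors: "finite (mors m d e)"
proof -
  have "mors m d e \<subseteq> (\<Union>A\<in>Pow (elems m d). {f. dom f = A \<and> ran f \<subseteq> elems m e})"
  proof
    fix f assume f: "f \<in> mors m d e"
    then have "dom f \<in> Pow (elems m d)" unfolding mors_def by blast
    then show "f \<in> (\<Union>A\<in>Pow (elems m d). {f. dom f = A \<and> ran f \<subseteq> elems m e})"
      using mors_ran[OF f] by blast
  qed
  moreover have "finite (\<Union>A\<in>Pow (elems m d). {f. dom f = A \<and> ran f \<subseteq> elems m e})"
    using finite_elems by (intro finite_UN_I finite_set_of_finite_maps) (auto intro: finite_subset)
  ultimately show ?thesis by (rule finite_subset)
qed

lemma pid_mor: "U \<subseteq> elems m d \<Longrightarrow> pid U \<in> mors m d d"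
  unfolding mors_def pid_def by (auto simp: dom_def inj_on_def split: if_splits)

lemma pid_comp: "pid U \<circ>\<^sub>m pid W = pid (U \<inter> W)"
  unfolding pid_def map_comp_def by (auto simp: fun_eq_iff)

lemma id_mor_pid: "id_mor m d = pid (elems m d)"
  unfolding id_mor_def pid_def by simp

locale FIM = vector_space scale for scale :: "'k::field \<Rightarrow> 'v::ab_group_add \<Rightarrow> 'v" (infixr "*s" 75) +
  fixes m :: nat and V :: "(nat \<Rightarrow> nat) \<Rightarrow> 'v set"
    and F :: "(nat \<Rightarrow> nat) \<Rightarrow> (nat \<Rightarrow> nat) \<Rightarrow> ((nat \<times> nat) \<rightharpoonup> (nat \<times> nat)) \<Rightarrow> 'v \<Rightarrow> 'v"
  assumes fim: "FIsharp_module scale m V F" and fg: "finitely_generated scale m V F"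
begin

lemma subV: "d \<in> objs m \<Longrightarrow> subspace (V d)"
  using fim unfolding FIsharp_module_def by blast

lemma Flin: "d \<in> objs m \<Longrightarrow> e \<in> objs m \<Longrightarrow> f \<in> mors m d e \<Longrightarrow> lin_on scale (V d) (V e) (F d e f)"
  using fim unfolding FIsharp_module_def lin_on_def by blast

lemma Fcomp: "d \<in> objs m \<Longrightarrow> e \<in> objs m \<Longrightarrow> c \<in> objs m \<Longrightarrow> f \<in> mors m d e \<Longrightarrow> g \<in> mors m e c
   \<Longrightarrow> x \<in> V d \<Longrightarrow> F d c (g \<circ>\<^sub>m f) x = F e c g (F d e f x)"
  using fim unfolding FIsharp_module_def by blast

lemma Fid: "d \<in> objs m \<Longrightarrow> x \<in> V d \<Longrightarrow> F d d (pid (elems m d)) x = x"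
  using fim unfolding FIsharp_module_def id_mor_pid by blast

lemma Fin: "d \<in> objs m \<Longrightarrow> e \<in> objs m \<Longrightarrow> f \<in> mors m d e \<Longrightarrow> x \<in> V d \<Longrightarrow> F d e f x \<in> V e"
  using Flin lin_on_in by blast

definition gens :: "((nat \<Rightarrow> nat) \<times> 'v) set" where
  "gens = (SOME G. finite G \<and> (\<forall>(d, x)\<in>G. d \<in> objs m \<and> x \<in> V d) \<and>
        (\<forall>e\<in>objs m. V e = span {F d e f x | d x f. (d, x) \<in> G \<and> f \<in> mors m d e}))"

lemma gens:
  "finite gens" "\<And>d x. (d, x) \<in> gens \<Longrightarrow> d \<in> objs m \<and> x \<in> V d"
  "\<And>e. e \<in> objs m \<Longrightarrow> V e = span {F d e f x | d x f. (d, x) \<in> gens \<and> f \<in> mors m d e}"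
proof -
  have "\<exists>G. finite G \<and> (\<forall>(d, x)\<in>G. d \<in> objs m \<and> x \<in> V d) \<and>
        (\<forall>e\<in>objs m. V e = span {F d e f x | d x f. (d, x) \<in> G \<and> f \<in> mors m d e})"
    using fg unfolding finitely_generated_def by blast
  then have *: "finite gens \<and> (\<forall>(d, x)\<in>gens. d \<in> objs m \<and> x \<in> V d) \<and>
        (\<forall>e\<in>objs m. V e = span {F d e f x | d x f. (d, x) \<in> gens \<and> f \<in> mors m d e})"
    unfolding gens_def by (rule someI_ex)
  then show "finite gens" "\<And>d x. (d, x) \<in> gens \<Longrightarrow> d \<in> objs m \<and> x \<in> V d"
    "\<And>e. e \<in> objs m \<Longrightarrow> V e = span {F d e f x | d x f. (d, x) \<in> gens \<and> f \<in> mors m d e}"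
    by auto
qed

definition gset :: "(nat \<Rightarrow> nat) \<Rightarrow> 'v set" where
  "gset e = {F d e f x | d x f. (d, x) \<in> gens \<and> f \<in> mors m d e}"

lemma gset_finite: "finite (gset e)"
proof -
  have "gset e = (\<Union>(d, x)\<in>gens. (\<lambda>f. F d e f x) ` mors m d e)"
    unfolding gset_def by auto
  then show ?thesis using gens(1) finite_mors by auto
qed

lemma V_span: "e \<in> objs m \<Longrightarrow> V e = span (gset e)"
  using gens(3) unfolding gset_def by blast

definition EE :: "(nat \<Rightarrow> nat) \<Rightarrow> (nat \<times> nat) set \<Rightarrow> 'v \<Rightarrow> 'v" where
  "EE d U = F d d (pid U)"

definition pT :: "(nat \<Rightarrow> nat) \<Rightarrow> (nat \<times> nat) set \<Rightarrow> 'v \<Rightarrow> 'v" where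
  "pT d T x = (\<Sum>U\<in>Pow T. ((-1) ^ (card T + card U)) *s EE d U x)"

lemma EE_lin: "d \<in> objs m \<Longrightarrow> U \<subseteq> elems m d \<Longrightarrow> lin_on scale (V d) (V d) (EE d U)"
  unfolding EE_def by (rule Flin) (auto intro: pid_mor)

lemma EE_comp: "d \<in> objs m \<Longrightarrow> U \<subseteq> elems m d \<Longrightarrow> W \<subseteq> elems m d \<Longrightarrow> x \<in> V d \<Longrightarrow>
   EE d U (EE d W x) = EE d (U \<inter> W) x"
  unfolding EE_def using Fcomp[of d d d "pid W" "pid U" x] pid_mor pid_comp by metis

lemma EE_full: "d \<in> objs m \<Longrightarrow> x \<in> V d \<Longrightarrow> EE d (elems m d) x = x"
  unfolding EE_def by (rule Fid)

lemma lin_on_lincomb: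
  assumes "\<And>i. i \<in> I \<Longrightarrow> lin_on scale W W' (f i)" "subspace W'"
  shows "lin_on scale W W' (\<lambda>x. \<Sum>i\<in>I. c i *s f i x)"
  unfolding lin_on_def
proof (intro conjI ballI allI)
  fix x assume "x \<in> W"
  then show "(\<Sum>i\<in>I. c i *s f i x) \<in> W'"
    using assms by (intro subspace_sum) (auto intro: subspace_scale lin_on_in)
next
  fix x y assume "x \<in> W" "y \<in> W"
  then show "(\<Sum>i\<in>I. c i *s f i (x + y)) = (\<Sum>i\<in>I. c i *s f i x) + (\<Sum>i\<in>I. c i *s f i y)"
  proof -
    have "(\<Sum>i\<in>I. c i *s f i (x + y)) = (\<Sum>i\<in>I. c i *s f i x + c i *s f i y)"
      using assms \<open>x \<in> W\<close> \<open>y \<in> W\<close> by (intro sum.cong refl) (metis lin_on_add scale_right_distrib)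
    then show ?thesis by (simp add: sum.distrib)
  qed
next
  fix a x assume "x \<in> W"
  then show "(\<Sum>i\<in>I. c i *s f i (a *s x)) = a *s (\<Sum>i\<in>I. c i *s f i x)"
  proof -
    have "(\<Sum>i\<in>I. c i *s f i (a *s x)) = (\<Sum>i\<in>I. a *s (c i *s f i x))"
      using assms \<open>x \<in> W\<close> by (intro sum.cong refl) (metis lin_on_scale scale_scale mult.commute)
    then show ?thesis by (simp add: scale_sum_right)
  qed
qed

lemma pT_lin: "d \<in> objs m \<Longrightarrow> T \<subseteq> elems m d \<Longrightarrow> lin_on scale (V d) (V d) (pT d T)"
  unfolding pT_def[abs_def]
  by (rule lin_on_lincomb) (auto intro: EE_lin subV)

lemma finite_T: "T \<subseteq> elems m d \<Longrightarrow> finite T"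
  using finite_elems finite_subset by blast

lemma pT_EE:
  assumes d: "d \<in> objs m" and T: "T \<subseteq> elems m d" and W: "W \<subseteq> elems m d" and x: "x \<in> V d"
  shows "pT d T (EE d W x) = (if T \<subseteq> W then pT d T x else 0)"
proof -
  have fT: "finite T" using T finite_T by blast
  have "pT d T (EE d W x) = (\<Sum>U\<in>Pow T. ((-1) ^ (card T + card U)) *s EE d (U \<inter> W) x)"
    unfolding pT_def using T W d x by (intro sum.cong refl) (auto simp: EE_comp)
  also have "\<dots> = (if T \<subseteq> W then pT d T x else 0)"
  proof (cases "T \<subseteq> W")
    case True
    have "(\<Sum>U\<in>Pow T. ((-1) ^ (card T + card U)) *s EE d (U \<inter> W) x) = pT d T x"
      unfolding pT_def using True by (intro sum.cong refl) (metis Int_absorb2 PowD order_trans)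
    then show ?thesis using True by simp
  next
    case False
    then obtain a where a: "a \<in> T" "a \<notin> W" by blast
    define T0 where "T0 = T - {a}"
    have T_eq: "T = insert a T0" and aT0: "a \<notin> T0" and fT0: "finite T0"
      using a fT unfolding T0_def by auto
    have Pow_eq: "Pow T = Pow T0 \<union> insert a ` Pow T0" by (simp add: T_eq Pow_insert)
    have disj: "Pow T0 \<inter> insert a ` Pow T0 = {}" using aT0 by auto
    have inj: "inj_on (insert a) (Pow T0)"
    proof (rule inj_onI)
      fix U U' assume "U \<in> Pow T0" "U' \<in> Pow T0" and eq: "insert a U = insert a U'"
      then have "a \<notin> U" "a \<notin> U'" using aT0 by auto
      then show "U = U'" using eq by (metis Diff_insert_absorb)
    qed
    have "(\<Sum>U\<in>Pow T. ((-1) ^ (card T + card U)) *s EE d (U \<inter> W) x) =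
      (\<Sum>U\<in>Pow T0. ((-1) ^ (card T + card U)) *s EE d (U \<inter> W) x) +
      (\<Sum>U\<in>insert a ` Pow T0. ((-1) ^ (card T + card U)) *s EE d (U \<inter> W) x)"
      unfolding Pow_eq using fT0 disj by (intro sum.union_disjoint) auto
    also have "(\<Sum>U\<in>insert a ` Pow T0. ((-1) ^ (card T + card U)) *s EE d (U \<inter> W) x) =
       (\<Sum>U\<in>Pow T0. ((-1) ^ (card T + card (insert a U))) *s EE d (insert a U \<inter> W) x)"
      by (subst sum.reindex[OF inj]) simp
    also have "\<dots> = (\<Sum>U\<in>Pow T0. - (((-1) ^ (card T + card U)) *s EE d (U \<inter> W) x))"
    proof (intro sum.cong refl)
      fix U assume U: "U \<in> Pow T0"
      have "a \<notin> U" using U aT0 by auto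
      moreover have "finite U" using U fT0 finite_subset by auto
      ultimately have "card (insert a U) = Suc (card U)" by simp
      moreover have "insert a U \<inter> W = U \<inter> W" using a by auto
      ultimately show "((-1) ^ (card T + card (insert a U))) *s EE d (insert a U \<inter> W) x =
        - (((-1) ^ (card T + card U)) *s EE d (U \<inter> W) x)"
        by simp
    qed
    also have "\<dots> = - (\<Sum>U\<in>Pow T0. ((-1) ^ (card T + card U)) *s EE d (U \<inter> W) x)"
      by (simp add: sum_negf)
    finally show ?thesis using False by simp
  qed
  finally show ?thesis .
qed

lemma EE_pT:
  assumes d: "d \<in> objs m" and T: "T \<subseteq> W" and W: "W \<subseteq> elems m d" and x: "x \<in> V d"
  shows "EE d W (pT d T x) = pT d T x"
proof -
  have "EE d W (pT d T x) = (\<Sum>U\<in>Pow T. EE d W (((-1) ^ (card T + card U)) *s EE d U x))"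
    unfolding pT_def using assms
    by (intro lin_on_sum[OF EE_lin subV]) (auto intro!: subspace_scale subV lin_on_in[OF EE_lin])
  also have "\<dots> = (\<Sum>U\<in>Pow T. ((-1) ^ (card T + card U)) *s EE d U x)"
    using assms
    by (intro sum.cong refl) (auto simp: lin_on_scale[OF EE_lin] lin_on_in[OF EE_lin] EE_comp Int_absorb1)
  finally show ?thesis unfolding pT_def .
qed

lemma pT_idem:
  assumes d: "d \<in> objs m" and T: "T \<subseteq> elems m d" and x: "x \<in> V d"
  shows "pT d T (pT d T x) = pT d T x"
proof -
  have fT: "finite T" using T finite_T by blast
  have "pT d T (pT d T x) = (\<Sum>U\<in>Pow T. pT d T (((-1) ^ (card T + card U)) *s EE d U x))"
    unfolding pT_def[of d T x] using assms
    by (intro lin_on_sum[OF pT_lin subV]) (auto intro!: subspace_scale subV lin_on_in[OF EE_lin])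
  also have "\<dots> = (\<Sum>U\<in>Pow T. if U = T then pT d T x else 0)"
    using assms
  proof (intro sum.cong refl)
    fix U assume U: "U \<in> Pow T"
    then have "pT d T (((-1) ^ (card T + card U)) *s EE d U x) =
       ((-1) ^ (card T + card U)) *s pT d T (EE d U x)"
      using assms by (auto intro!: lin_on_scale[OF pT_lin] lin_on_in[OF EE_lin])
    also have "\<dots> = (if U = T then pT d T x else 0)"
      using U assms by (auto simp: pT_EE)
    finally show "pT d T (((-1) ^ (card T + card U)) *s EE d U x) = (if U = T then pT d T x else 0)" .
  qed
  also have "\<dots> = pT d T x" using fT by simp
  finally show ?thesis .
qed

lemma alt_sum_supersets:
  assumes "finite S" "U \<subseteq> S"
  shows "(\<Sum>T | T \<subseteq> S \<and> U \<subseteq> T. (-1::'k) ^ card T) = (if U = S then (-1) ^ card S else 0)"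
proof (cases "U = S")
  case True
  then have "{T. T \<subseteq> S \<and> U \<subseteq> T} = {S}" by auto
  then show ?thesis using True by simp
next
  case False
  then have "U \<subset> S" using assms by auto
  have fin: "finite {T. T \<subseteq> S \<and> U \<subseteq> T}" using assms by auto
  have "(\<Sum>T | T \<subseteq> S \<and> U \<subseteq> T. (-1::'k) ^ card T) = 0"
    apply (rule sum_alternating_cancels[OF fin])
    using card_subsupersets_even_odd[OF assms(1) \<open>U \<subset> S\<close>] by simp
  then show ?thesis using False by simp
qed

lemma resolution:
  assumes d: "d \<in> objs m" and x: "x \<in> V d"
  shows "(\<Sum>T\<in>Pow (elems m d). pT d T x) = x"
proof -
  define E where "E = elems m d"
  have fE: "finite E" unfolding E_def by (rule finite_elems)
  have "(\<Sum>T\<in>Pow E. pT d T x) = (\<Sum>T\<in>Pow E. \<Sum>U\<in>Pow T. ((-1) ^ (card T + card U)) *s EE d U x)"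
    unfolding pT_def ..
  also have "\<dots> = (\<Sum>U\<in>Pow E. \<Sum>T | T \<subseteq> E \<and> U \<subseteq> T. ((-1) ^ (card T + card U)) *s EE d U x)"
  proof -
    have "(\<Sum>T\<in>Pow E. \<Sum>U\<in>Pow T. ((-1) ^ (card T + card U)) *s EE d U x) =
      (\<Sum>T\<in>Pow E. \<Sum>U | U \<in> Pow E \<and> U \<subseteq> T. ((-1) ^ (card T + card U)) *s EE d U x)"
      by (intro sum.cong refl arg_cong[where f="\<lambda>A. sum _ A"]) auto
    also have "\<dots> = (\<Sum>U\<in>Pow E. \<Sum>T | T \<in> Pow E \<and> U \<subseteq> T. ((-1) ^ (card T + card U)) *s EE d U x)"
      using fE by (intro sum.swap_restrict) auto
    also have "\<dots> = (\<Sum>U\<in>Pow E. \<Sum>T | T \<subseteq> E \<and> U \<subseteq> T. ((-1) ^ (card T + card U)) *s EE d U x)"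
      by simp
    finally show ?thesis .
  qed
  also have "\<dots> = (\<Sum>U\<in>Pow E. ((-1) ^ card U * (\<Sum>T | T \<subseteq> E \<and> U \<subseteq> T. (-1) ^ card T)) *s EE d U x)"
    by (intro sum.cong refl) (simp add: scale_sum_left sum_distrib_left power_add mult.commute)
  also have "\<dots> = (\<Sum>U\<in>Pow E. if U = E then EE d U x else 0)"
    using fE by (intro sum.cong refl) (auto simp: alt_sum_supersets power_add[symmetric])
  also have "\<dots> = x" using fE d x by (simp add: E_def EE_full)
  finally show ?thesis unfolding E_def .
qed

end



definition pf :: "(nat \<Rightarrow> nat \<Rightarrow> nat) \<Rightarrow> nat \<times> nat \<Rightarrow> nat \<times> nat" where
  "pf \<sigma> = (\<lambda>(i, a). (i, \<sigma> i a))"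

lemma pf_simp [simp]: "pf \<sigma> (i, a) = (i, \<sigma> i a)"
  unfolding pf_def by simp

lemma fst_pf [simp]: "fst (pf \<sigma> x) = fst x"
  by (cases x) simp

lemma perm_mor_eq: "perm_mor m d \<sigma> x = (if x \<in> elems m d then Some (pf \<sigma> x) else None)"
  by (cases x) (simp add: perm_mor_def)

lemma pf_elems:
  assumes "\<sigma> \<in> Sd m d" "x \<in> elems m d" shows "pf \<sigma> x \<in> elems m d"
proof (cases x)
  case (Pair i a)
  then have "i < m" "a < d i" using assms(2) unfolding elems_def by auto
  have "\<sigma> i permutes {..<d i}" using assms(1) \<open>i < m\<close> unfolding Sd_def by blast
  then have "\<sigma> i a \<in> {..<d i}" using \<open>a < d i\<close> permutes_in_image by (metis lessThan_iff)
  then show ?thesis using Pair \<open>i < m\<close> unfolding elems_def by auto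
qed

lemma pf_inj:
  assumes "\<sigma> \<in> Sd m d" shows "inj_on (pf \<sigma>) (elems m d)"
proof (rule inj_onI)
  fix x y assume "x \<in> elems m d" "y \<in> elems m d" "pf \<sigma> x = pf \<sigma> y"
  moreover obtain i a j b where "x = (i, a)" "y = (j, b)" by fastforce
  ultimately show "x = y" using assms unfolding Sd_def elems_def
    by (auto dest: permutes_inj_on simp: inj_on_def)
qed

lemma perm_mor_mors:
  assumes "\<sigma> \<in> Sd m d" shows "perm_mor m d \<sigma> \<in> mors m d d"
  unfolding mors_def
proof (intro CollectI conjI ballI)
  show "dom (perm_mor m d \<sigma>) \<subseteq> elems m d" by (auto simp: perm_mor_eq split: if_splits)
  show "inj_on (perm_mor m d \<sigma>) (dom (perm_mor m d \<sigma>))"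
    using pf_inj[OF assms] by (auto simp: perm_mor_eq inj_on_def split: if_splits)
  fix x assume "x \<in> dom (perm_mor m d \<sigma>)"
  then have x: "x \<in> elems m d" by (auto simp: perm_mor_eq split: if_splits)
  then show "fst (the (perm_mor m d \<sigma> x)) = fst x" "the (perm_mor m d \<sigma> x) \<in> elems m d"
    using pf_elems[OF assms x] by (auto simp: perm_mor_eq)
qed

lemma perm_pid:
  assumes "\<sigma> \<in> Sd m d" "U \<subseteq> elems m d"
  shows "perm_mor m d \<sigma> \<circ>\<^sub>m pid U = pid (pf \<sigma> ` U) \<circ>\<^sub>m perm_mor m d \<sigma>"
proof
  fix x
  show "(perm_mor m d \<sigma> \<circ>\<^sub>m pid U) x = (pid (pf \<sigma> ` U) \<circ>\<^sub>m perm_mor m d \<sigma>) x"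
  proof (cases "x \<in> elems m d")
    case True
    have "pf \<sigma> x \<in> pf \<sigma> ` U \<longleftrightarrow> x \<in> U"
      using pf_inj[OF assms(1)] True assms(2) by (auto simp: inj_on_def)
    then show ?thesis using True assms by (auto simp: map_comp_def pid_def perm_mor_eq)
  next
    case False
    then show ?thesis using assms by (auto simp: map_comp_def pid_def perm_mor_eq)
  qed
qed

lemma mors_comp:
  assumes f: "f \<in> mors m a b" and g: "g \<in> mors m b c"
  shows "g \<circ>\<^sub>m f \<in> mors m a c"
  unfolding mors_def
proof (intro CollectI conjI ballI)
  have dsub: "dom (g \<circ>\<^sub>m f) \<subseteq> dom f" by (auto simp: map_comp_def dom_def split: option.splits)
  then show "dom (g \<circ>\<^sub>m f) \<subseteq> elems m a" using f unfolding mors_def by blast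
  have key: "x \<in> dom (g \<circ>\<^sub>m f) \<Longrightarrow> \<exists>u w. f x = Some u \<and> g u = Some w \<and> (g \<circ>\<^sub>m f) x = Some w \<and> u \<in> dom g" for x
    by (auto simp: map_comp_def dom_def split: option.splits)
  show "inj_on (g \<circ>\<^sub>m f) (dom (g \<circ>\<^sub>m f))"
  proof (rule inj_onI)
    fix x y assume x: "x \<in> dom (g \<circ>\<^sub>m f)" and y: "y \<in> dom (g \<circ>\<^sub>m f)" and eq: "(g \<circ>\<^sub>m f) x = (g \<circ>\<^sub>m f) y"
    obtain u w where 1: "f x = Some u" "g u = Some w" "(g \<circ>\<^sub>m f) x = Some w" "u \<in> dom g" using key[OF x] by blast
    obtain u' w' where 2: "f y = Some u'" "g u' = Some w'" "(g \<circ>\<^sub>m f) y = Some w'" "u' \<in> dom g" using key[OF y] by blast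
    have "g u = g u'" using 1 2 eq by simp
    then have "u = u'" using g 1(4) 2(4) unfolding mors_def inj_on_def by blast
    moreover have "x \<in> dom f" "y \<in> dom f" using 1 2 by auto
    ultimately show "x = y" using f 1 2 unfolding mors_def inj_on_def by auto
  qed
  fix x assume x: "x \<in> dom (g \<circ>\<^sub>m f)"
  obtain u w where 1: "f x = Some u" "g u = Some w" "(g \<circ>\<^sub>m f) x = Some w" "u \<in> dom g" using key[OF x] by blast
  have "x \<in> dom f" using 1 by auto
  then have "fst u = fst x" using f 1 unfolding mors_def by force
  moreover have "fst w = fst u" "w \<in> elems m c" using g 1 unfolding mors_def by force+
  ultimately show "fst (the ((g \<circ>\<^sub>m f) x)) = fst x" "the ((g \<circ>\<^sub>m f) x) \<in> elems m c" using 1 by auto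
qed

context FIM
begin

definition Pi :: "(nat \<Rightarrow> nat) \<Rightarrow> (nat \<Rightarrow> nat \<Rightarrow> nat) \<Rightarrow> 'v \<Rightarrow> 'v" where
  "Pi d \<sigma> = F d d (perm_mor m d \<sigma>)"

abbreviation trd :: "(nat \<Rightarrow> nat) \<Rightarrow> ('v \<Rightarrow> 'v) \<Rightarrow> 'k" where
  "trd d \<phi> \<equiv> trace_on scale (V d) \<phi>"

lemma Pi_lin: "d \<in> objs m \<Longrightarrow> \<sigma> \<in> Sd m d \<Longrightarrow> lin_on scale (V d) (V d) (Pi d \<sigma>)"
  unfolding Pi_def by (intro Flin perm_mor_mors)

lemma Pi_EE:
  assumes d: "d \<in> objs m" and \<sigma>: "\<sigma> \<in> Sd m d" and U: "U \<subseteq> elems m d" and x: "x \<in> V d"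
  shows "Pi d \<sigma> (EE d U x) = EE d (pf \<sigma> ` U) (Pi d \<sigma> x)"
proof -
  have U': "pf \<sigma> ` U \<subseteq> elems m d" using pf_elems[OF \<sigma>] U by auto
  have "Pi d \<sigma> (EE d U x) = F d d (perm_mor m d \<sigma> \<circ>\<^sub>m pid U) x"
    unfolding Pi_def EE_def using d x U \<sigma> by (intro Fcomp[symmetric] pid_mor perm_mor_mors) auto
  also have "\<dots> = F d d (pid (pf \<sigma> ` U) \<circ>\<^sub>m perm_mor m d \<sigma>) x"
    using perm_pid[OF \<sigma> U] by simp
  also have "\<dots> = EE d (pf \<sigma> ` U) (Pi d \<sigma> x)"
    unfolding Pi_def EE_def using d x U' \<sigma> by (intro Fcomp pid_mor perm_mor_mors) auto
  finally show ?thesis .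
qed

lemma trd_cong: "d \<in> objs m \<Longrightarrow> (\<And>x. x \<in> V d \<Longrightarrow> f x = g x) \<Longrightarrow> trd d f = trd d g"
  using trace_cong[OF gset_finite V_span] by blast

lemma trd_zero: "d \<in> objs m \<Longrightarrow> (\<And>x. x \<in> V d \<Longrightarrow> f x = 0) \<Longrightarrow> trd d f = 0"
  using trace_zero[OF gset_finite V_span] by blast

lemma trd_sum: "d \<in> objs m \<Longrightarrow> (\<And>i x. i \<in> I \<Longrightarrow> x \<in> V d \<Longrightarrow> f i x \<in> V d) \<Longrightarrow>
  trd d (\<lambda>x. \<Sum>i\<in>I. f i x) = (\<Sum>i\<in>I. trd d (f i))"
  using trace_sum[OF gset_finite V_span] by blast

lemma trd_cyclic: "d \<in> objs m \<Longrightarrow> d' \<in> objs m \<Longrightarrow> lin_on scale (V d') (V d) A \<Longrightarrow>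
  lin_on scale (V d) (V d') B \<Longrightarrow> trd d (A \<circ> B) = trd d' (B \<circ> A)"
  using trace_cyclic[OF gset_finite V_span gset_finite V_span] by blast

lemma char_split:
  assumes d: "d \<in> objs m" and \<sigma>: "\<sigma> \<in> Sd m d"
  shows "trd d (Pi d \<sigma>) = (\<Sum>T\<in>Pow (elems m d). trd d (Pi d \<sigma> \<circ> pT d T))"
proof -
  have "trd d (Pi d \<sigma>) = trd d (\<lambda>x. \<Sum>T\<in>Pow (elems m d). (Pi d \<sigma> \<circ> pT d T) x)"
  proof (rule trd_cong[OF d])
    fix x assume x: "x \<in> V d"
    have "Pi d \<sigma> x = Pi d \<sigma> (\<Sum>T\<in>Pow (elems m d). pT d T x)" using resolution[OF d x] by simp
    also have "\<dots> = (\<Sum>T\<in>Pow (elems m d). Pi d \<sigma> (pT d T x))"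
      using d \<sigma> x by (intro lin_on_sum[OF Pi_lin subV]) (auto intro: lin_on_in[OF pT_lin])
    finally show "Pi d \<sigma> x = (\<Sum>T\<in>Pow (elems m d). (Pi d \<sigma> \<circ> pT d T) x)" by simp
  qed
  also have "\<dots> = (\<Sum>T\<in>Pow (elems m d). trd d (Pi d \<sigma> \<circ> pT d T))"
    using d \<sigma> by (intro trd_sum) (auto intro: lin_on_in[OF pT_lin] lin_on_in[OF Pi_lin])
  finally show ?thesis .
qed

lemma nonstable_zero:
  assumes d: "d \<in> objs m" and \<sigma>: "\<sigma> \<in> Sd m d" and T: "T \<subseteq> elems m d" and ns: "pf \<sigma> ` T \<noteq> T"
  shows "trd d (Pi d \<sigma> \<circ> pT d T) = 0"
proof -
  have fT: "finite T" using T finite_T by blast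
  have inj: "inj_on (pf \<sigma>) T" using pf_inj[OF \<sigma>] T inj_on_subset by blast
  have "trd d (Pi d \<sigma> \<circ> pT d T) = trd d ((Pi d \<sigma> \<circ> pT d T) \<circ> pT d T)"
    using d T by (intro trd_cong) (auto simp: pT_idem)
  also have "\<dots> = trd d (pT d T \<circ> (Pi d \<sigma> \<circ> pT d T))"
    by (rule trd_cyclic[OF d d lin_on_comp[OF pT_lin[OF d T] Pi_lin[OF d \<sigma>]] pT_lin[OF d T]])
  also have "\<dots> = 0"
  proof (rule trd_zero[OF d])
    fix x assume x: "x \<in> V d"
    have Pix: "Pi d \<sigma> x \<in> V d" using lin_on_in[OF Pi_lin[OF d \<sigma>] x] .
    have "Pi d \<sigma> (pT d T x) = (\<Sum>U\<in>Pow T. Pi d \<sigma> (((-1) ^ (card T + card U)) *s EE d U x))"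
      unfolding pT_def using d \<sigma> x T
      by (intro lin_on_sum[OF Pi_lin subV]) (auto intro!: subspace_scale subV lin_on_in[OF EE_lin])
    also have "\<dots> = (\<Sum>U\<in>Pow T. ((-1) ^ (card T + card U)) *s EE d (pf \<sigma> ` U) (Pi d \<sigma> x))"
      using d \<sigma> x T
      by (intro sum.cong refl) (auto simp: lin_on_scale[OF Pi_lin] lin_on_in[OF EE_lin] Pi_EE)
    finally have 1: "Pi d \<sigma> (pT d T x) = \<dots>" .
    have "pT d T (Pi d \<sigma> (pT d T x)) =
      (\<Sum>U\<in>Pow T. pT d T (((-1) ^ (card T + card U)) *s EE d (pf \<sigma> ` U) (Pi d \<sigma> x)))"
      unfolding 1 using d \<sigma> T Pix pf_elems[OF \<sigma>]
      by (intro lin_on_sum[OF pT_lin subV]) (auto intro!: subspace_scale subV lin_on_in[OF EE_lin])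
    also have "\<dots> = (\<Sum>U\<in>Pow T. 0)"
    proof (intro sum.cong refl)
      fix U assume U: "U \<in> Pow T"
      have U': "pf \<sigma> ` U \<subseteq> elems m d" using U T pf_elems[OF \<sigma>] by auto
      have "\<not> T \<subseteq> pf \<sigma> ` U"
      proof
        assume sub: "T \<subseteq> pf \<sigma> ` U"
        have "pf \<sigma> ` U \<subseteq> pf \<sigma> ` T" using U by auto
        have cU: "card (pf \<sigma> ` U) = card U" using inj U by (auto intro: card_image inj_on_subset)
        have cT: "card (pf \<sigma> ` T) = card T" using inj by (rule card_image)
        have "card T \<le> card U" using card_mono[OF finite_imageI[OF finite_subset[OF _ fT]] sub] U cU by auto
        then have "U = T" using U fT by (meson PowD card_seteq)
        then have "T \<subseteq> pf \<sigma> ` T" using sub by simp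
        then have "T = pf \<sigma> ` T" using cT fT by (simp add: card_seteq)
        then show False using ns by simp
      qed
      then show "pT d T (((-1) ^ (card T + card U)) *s EE d (pf \<sigma> ` U) (Pi d \<sigma> x)) = 0"
        using d T U' Pix by (simp add: lin_on_scale[OF pT_lin] lin_on_in[OF EE_lin] pT_EE)
    qed
    finally show "(pT d T \<circ> (Pi d \<sigma> \<circ> pT d T)) x = 0" by simp
  qed
  finally show ?thesis .
qed

definition Nb :: nat where
  "Nb = Max (insert 0 ((\<lambda>(d, x). card (elems m d)) ` gens))"

lemma Nb_ge: "(d, x) \<in> gens \<Longrightarrow> card (elems m d) \<le> Nb"
  unfolding Nb_def using gens(1) by (intro Max_ge) force+

lemma vanish:
  assumes d: "d \<in> objs m" and T: "T \<subseteq> elems m d" and big: "Nb < card T" and x: "x \<in> V d"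
  shows "pT d T x = 0"
proof -
  let ?P = "{x \<in> V d. pT d T x = 0}"
  have lin: "lin_on scale (V d) (V d) (pT d T)" using pT_lin[OF d T] .
  have z: "pT d T 0 = 0"
    using lin_on_scale[OF lin subspace_0[OF subV[OF d]], of 0] by simp
  have sub: "subspace ?P"
    unfolding subspace_def using subV[OF d] z
    by (auto simp: lin_on_add[OF lin] lin_on_scale[OF lin] subspace_add subspace_scale subspace_0)
  have "x \<in> span (gset d)" using x V_span[OF d] by simp
  then have "x \<in> ?P"
  proof (rule span_subspace_induct[OF _ sub])
    fix y assume "y \<in> gset d"
    then obtain d' x' f where y: "y = F d' d f x'" and g: "(d', x') \<in> gens" and f: "f \<in> mors m d' d"
      unfolding gset_def by blast
    have d': "d' \<in> objs m" and x': "x' \<in> V d'" using gens(2)[OF g] by auto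
    have "ran f = (\<lambda>z. the (f z)) ` dom f" unfolding ran_def dom_def by force
    moreover have "finite (dom f)" using f unfolding mors_def by (auto intro: finite_subset[OF _ finite_elems])
    ultimately have "card (ran f) \<le> card (dom f)" by (simp add: card_image_le)
    also have "\<dots> \<le> card (elems m d')" using f unfolding mors_def by (auto intro: card_mono finite_elems)
    also have "\<dots> \<le> Nb" using Nb_ge[OF g] .
    finally have "card (ran f) < card T" using big by simp
    then have "\<not> T \<subseteq> ran f" using finite_subset[OF mors_ran[OF f] finite_elems] by (meson card_mono not_le)
    then obtain a where a: "a \<in> T" "a \<notin> ran f" by blast
    have fa: "pid (elems m d - {a}) \<circ>\<^sub>m f = f"
    proof
      fix z show "(pid (elems m d - {a}) \<circ>\<^sub>m f) z = f z"
      proof (cases "f z")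
        case (Some b)
        then have "b \<in> ran f" unfolding ran_def by blast
        then have "b \<in> elems m d - {a}" using a mors_ran[OF f] by auto
        then show ?thesis using Some by (simp add: map_comp_def pid_def)
      qed (simp add: map_comp_def)
    qed
    have Vy: "y \<in> V d" using y Fin[OF d' d f x'] by simp
    have "y = F d' d (pid (elems m d - {a}) \<circ>\<^sub>m f) x'" using fa y by simp
    also have "\<dots> = EE d (elems m d - {a}) y"
      unfolding EE_def y using d d' f x' by (intro Fcomp pid_mor) auto
    finally have "pT d T y = pT d T (EE d (elems m d - {a}) y)" by simp
    also have "\<dots> = 0" using pT_EE[OF d T _ Vy, of "elems m d - {a}"] a by auto
    finally show "y \<in> ?P" using Vy by simp
  qed
  then show ?thesis by simp
qed

lemma vanish_tr:
  assumes d: "d \<in> objs m" and \<sigma>: "\<sigma> \<in> Sd m d" and T: "T \<subseteq> elems m d" and big: "Nb < card T"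
  shows "trd d (Pi d \<sigma> \<circ> pT d T) = 0"
proof (rule trd_zero[OF d])
  fix x assume x: "x \<in> V d"
  have z: "Pi d \<sigma> 0 = 0"
    using lin_on_scale[OF Pi_lin[OF d \<sigma>] subspace_0[OF subV[OF d]], of 0] by simp
  show "(Pi d \<sigma> \<circ> pT d T) x = 0" using vanish[OF d T big x] z by simp
qed

lemma cross:
  assumes d: "d \<in> objs m" and d': "d' \<in> objs m" and \<sigma>: "\<sigma> \<in> Sd m d" and \<sigma>': "\<sigma>' \<in> Sd m d'"
    and T: "T \<subseteq> elems m d" and T': "T' \<subseteq> elems m d'" and st: "pf \<sigma> ` T = T"
    and \<rho>: "bij_betw \<rho> T T'" and fst\<rho>: "\<And>x. x \<in> T \<Longrightarrow> fst (\<rho> x) = fst x"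
    and comm: "\<And>x. x \<in> T \<Longrightarrow> \<rho> (pf \<sigma> x) = pf \<sigma>' (\<rho> x)"
  shows "trd d (Pi d \<sigma> \<circ> pT d T) = trd d' (Pi d' \<sigma>' \<circ> pT d' T')"
proof -
  define \<alpha> where "\<alpha> = (\<lambda>x. if x \<in> T then Some (\<rho> x) else None)"
  define \<beta> where "\<beta> = (\<lambda>y. if y \<in> T' then Some (inv_into T \<rho> y) else None)"
  have inj\<rho>: "inj_on \<rho> T" and im\<rho>: "\<rho> ` T = T'" using \<rho> by (auto simp: bij_betw_def)
  have \<rho>T: "x \<in> T \<Longrightarrow> \<rho> x \<in> T'" for x using im\<rho> by blast
  have \<rho>U: "U \<subseteq> T \<Longrightarrow> \<rho> ` U \<subseteq> elems m d'" for U using \<rho>T T' by blast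
  have inv1: "x \<in> T \<Longrightarrow> inv_into T \<rho> (\<rho> x) = x" for x using inj\<rho> by simp
  have inv2: "y \<in> T' \<Longrightarrow> inv_into T \<rho> y \<in> T" for y using im\<rho> by (auto intro: inv_into_into)
  have inv3: "y \<in> T' \<Longrightarrow> \<rho> (inv_into T \<rho> y) = y" for y using im\<rho> by (auto intro: f_inv_into_f)
  have dom\<alpha>: "dom \<alpha> = T" unfolding \<alpha>_def dom_def by auto
  have \<alpha>x: "x \<in> T \<Longrightarrow> \<alpha> x = Some (\<rho> x)" for x unfolding \<alpha>_def by simp
  have dom\<beta>: "dom \<beta> = T'" unfolding \<beta>_def dom_def by auto
  have \<beta>x: "y \<in> T' \<Longrightarrow> \<beta> y = Some (inv_into T \<rho> y)" for y unfolding \<beta>_def by simp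
  have \<alpha>m: "\<alpha> \<in> mors m d d'"
    unfolding mors_def
  proof (intro CollectI conjI ballI)
    show "dom \<alpha> \<subseteq> elems m d" using dom\<alpha> T by simp
    show "inj_on \<alpha> (dom \<alpha>)" unfolding dom\<alpha> using inj\<rho> by (simp add: inj_on_def \<alpha>x)
    fix x assume "x \<in> dom \<alpha>"
    then have x: "x \<in> T" using dom\<alpha> by simp
    show "fst (the (\<alpha> x)) = fst x" using x \<alpha>x fst\<rho> by simp
    show "the (\<alpha> x) \<in> elems m d'" using \<alpha>x[OF x] \<rho>T[OF x] T' by auto
  qed
  have \<beta>m: "\<beta> \<in> mors m d' d"
    unfolding mors_def
  proof (intro CollectI conjI ballI)
    show "dom \<beta> \<subseteq> elems m d'" using dom\<beta> T' by simp
    show "inj_on \<beta> (dom \<beta>)" unfolding dom\<beta> inj_on_def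
    proof (intro ballI impI)
      fix y z assume "y \<in> T'" "z \<in> T'" "\<beta> y = \<beta> z"
      then have "inv_into T \<rho> y = inv_into T \<rho> z" using \<beta>x by simp
      then show "y = z" using inv3 \<open>y \<in> T'\<close> \<open>z \<in> T'\<close> by metis
    qed
    fix y assume "y \<in> dom \<beta>"
    then have y: "y \<in> T'" using dom\<beta> by simp
    have "fst (inv_into T \<rho> y) = fst (\<rho> (inv_into T \<rho> y))" using fst\<rho>[OF inv2[OF y]] by simp
    then show "fst (the (\<beta> y)) = fst y" using y \<beta>x inv3 by simp
    show "the (\<beta> y) \<in> elems m d" using \<beta>x[OF y] inv2[OF y] T by auto
  qed
  define A where "A = F d d' \<alpha>"
  define B where "B = F d' d \<beta>"
  have Alin: "lin_on scale (V d) (V d') A" unfolding A_def by (rule Flin[OF d d' \<alpha>m])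
  have Blin: "lin_on scale (V d') (V d) B" unfolding B_def by (rule Flin[OF d' d \<beta>m])
  have eU: "EE d U x = B (EE d' (\<rho> ` U) (A x))" if U: "U \<subseteq> T" and x: "x \<in> V d" for U x
  proof -
    have U': "\<rho> ` U \<subseteq> elems m d'" using U \<rho>T T' by blast
    have "\<beta> \<circ>\<^sub>m (pid (\<rho> ` U) \<circ>\<^sub>m \<alpha>) = pid U"
    proof
      fix z show "(\<beta> \<circ>\<^sub>m (pid (\<rho> ` U) \<circ>\<^sub>m \<alpha>)) z = pid U z"
      proof (cases "z \<in> T")
        case True
        have "\<rho> z \<in> \<rho> ` U \<longleftrightarrow> z \<in> U" using inj\<rho> U True by (auto simp: inj_on_def)
        then show ?thesis using True \<rho>T inv1 by (auto simp: map_comp_def pid_def \<alpha>_def \<beta>_def)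
      next
        case False
        then show ?thesis using U by (auto simp: map_comp_def pid_def \<alpha>_def)
      qed
    qed
    then have "EE d U x = F d d (\<beta> \<circ>\<^sub>m (pid (\<rho> ` U) \<circ>\<^sub>m \<alpha>)) x" unfolding EE_def by simp
    also have "\<dots> = B (F d d' (pid (\<rho> ` U) \<circ>\<^sub>m \<alpha>) x)"
      unfolding B_def using d d' x \<alpha>m \<beta>m pid_mor[OF U'] by (intro Fcomp mors_comp) auto
    also have "F d d' (pid (\<rho> ` U) \<circ>\<^sub>m \<alpha>) x = EE d' (\<rho> ` U) (A x)"
      unfolding EE_def A_def using d d' x \<alpha>m U' by (intro Fcomp pid_mor) auto
    finally show ?thesis .
  qed
  have cardT: "card T' = card T" using \<rho> bij_betw_same_card by metis
  have pTeq: "pT d T x = B (pT d' T' (A x))" if x: "x \<in> V d" for x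
  proof -
    have Ax: "A x \<in> V d'" using lin_on_in[OF Alin x] .
    have injP: "inj_on (image \<rho>) (Pow T)" using inj\<rho> by (auto simp: inj_on_def inj_on_image_eq_iff)
    have imP: "image \<rho> ` Pow T = Pow T'" using im\<rho> by (simp add: image_Pow_surj)
    have "pT d T x = (\<Sum>U\<in>Pow T. ((-1) ^ (card T + card U)) *s B (EE d' (\<rho> ` U) (A x)))"
      unfolding pT_def using eU x by (intro sum.cong refl) auto
    also have "\<dots> = (\<Sum>U\<in>Pow T. B (((-1) ^ (card T' + card (\<rho> ` U))) *s EE d' (\<rho> ` U) (A x)))"
    proof (intro sum.cong refl)
      fix U assume "U \<in> Pow T"
      then have "card (\<rho> ` U) = card U" using inj\<rho> by (auto intro: card_image inj_on_subset)
      moreover have "EE d' (\<rho> ` U) (A x) \<in> V d'"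
        using \<rho>U[of U] \<open>U \<in> Pow T\<close> Ax by (intro lin_on_in[OF EE_lin[OF d']]) auto
      ultimately show "((-1) ^ (card T + card U)) *s B (EE d' (\<rho> ` U) (A x)) =
          B (((-1) ^ (card T' + card (\<rho> ` U))) *s EE d' (\<rho> ` U) (A x))"
        using cardT by (simp add: lin_on_scale[OF Blin])
    qed
    also have "\<dots> = B (\<Sum>U\<in>Pow T. ((-1) ^ (card T' + card (\<rho> ` U))) *s EE d' (\<rho> ` U) (A x))"
      using \<rho>U Ax
      by (intro lin_on_sum[OF Blin subV[OF d'], symmetric] subspace_scale[OF subV[OF d']]
          lin_on_in[OF EE_lin[OF d']]) auto
    also have "(\<Sum>U\<in>Pow T. ((-1) ^ (card T' + card (\<rho> ` U))) *s EE d' (\<rho> ` U) (A x)) =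
        (\<Sum>U'\<in>Pow T'. ((-1) ^ (card T' + card U')) *s EE d' U' (A x))"
      using sum.reindex[OF injP, of "\<lambda>U'. ((-1) ^ (card T' + card U')) *s EE d' U' (A x)"] imP
      by simp
    finally show ?thesis unfolding pT_def[of d' T'] .
  qed
  have comp: "\<alpha> \<circ>\<^sub>m (perm_mor m d \<sigma> \<circ>\<^sub>m \<beta>) = perm_mor m d' \<sigma>' \<circ>\<^sub>m pid T'"
  proof
    fix y show "(\<alpha> \<circ>\<^sub>m (perm_mor m d \<sigma> \<circ>\<^sub>m \<beta>)) y = (perm_mor m d' \<sigma>' \<circ>\<^sub>m pid T') y"
    proof (cases "y \<in> T'")
      case True
      define x where "x = inv_into T \<rho> y"
      have x: "x \<in> T" "\<rho> x = y" using inv2 inv3 True unfolding x_def by auto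
      have "pf \<sigma> x \<in> T" using st x by blast
      moreover have "x \<in> elems m d" using x T by auto
      moreover have "y \<in> elems m d'" using True T' by auto
      ultimately show ?thesis using True x comm[of x]
        by (auto simp: map_comp_def pid_def \<alpha>_def \<beta>_def perm_mor_eq x_def[symmetric])
    next
      case False
      then show ?thesis by (auto simp: map_comp_def pid_def \<beta>_def)
    qed
  qed
  have PiAB: "A (Pi d \<sigma> (B y)) = Pi d' \<sigma>' (EE d' T' y)" if y: "y \<in> V d'" for y
  proof -
    have "A (Pi d \<sigma> (B y)) = A (F d' d (perm_mor m d \<sigma> \<circ>\<^sub>m \<beta>) y)"
      unfolding Pi_def B_def using d d' y \<beta>m perm_mor_mors[OF \<sigma>] by (subst Fcomp) auto
    also have "\<dots> = F d' d' (\<alpha> \<circ>\<^sub>m (perm_mor m d \<sigma> \<circ>\<^sub>m \<beta>)) y"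
      unfolding A_def using d d' y \<beta>m perm_mor_mors[OF \<sigma>] \<alpha>m
      by (subst Fcomp[of d' d d']) (auto intro: mors_comp)
    also have "\<dots> = F d' d' (perm_mor m d' \<sigma>' \<circ>\<^sub>m pid T') y" using comp by simp
    also have "\<dots> = Pi d' \<sigma>' (EE d' T' y)"
      unfolding Pi_def EE_def using d' y T' perm_mor_mors[OF \<sigma>'] by (intro Fcomp pid_mor) auto
    finally show ?thesis .
  qed
  have PiBlin: "lin_on scale (V d') (V d) (Pi d \<sigma> \<circ> B)" using lin_on_comp[OF Blin Pi_lin[OF d \<sigma>]] .
  have pAlin: "lin_on scale (V d) (V d') (pT d' T' \<circ> A)" using lin_on_comp[OF Alin pT_lin[OF d' T']] .
  have "trd d (Pi d \<sigma> \<circ> pT d T) = trd d ((Pi d \<sigma> \<circ> B) \<circ> (pT d' T' \<circ> A))"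
    using pTeq by (intro trd_cong[OF d]) simp
  also have "\<dots> = trd d' ((pT d' T' \<circ> A) \<circ> (Pi d \<sigma> \<circ> B))"
    by (rule trd_cyclic[OF d d' PiBlin pAlin])
  also have "\<dots> = trd d' (pT d' T' \<circ> (Pi d' \<sigma>' \<circ> EE d' T'))"
    using PiAB by (intro trd_cong[OF d']) simp
  also have "\<dots> = trd d' ((Pi d' \<sigma>' \<circ> EE d' T') \<circ> pT d' T')"
    by (rule trd_cyclic[OF d' d' pT_lin[OF d' T'] lin_on_comp[OF EE_lin[OF d' T'] Pi_lin[OF d' \<sigma>']]])
  also have "\<dots> = trd d' (Pi d' \<sigma>' \<circ> pT d' T')"
    using d' T' by (intro trd_cong[OF d']) (simp add: EE_pT)
  finally show ?thesis .
qed

end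



section \<open>Orbits of a single permutation\<close>

lemma orbit_of_eq: "permutation s \<Longrightarrow> orbit_of s a = orbit s a"
  unfolding orbit_of_def by (simp add: orbit_altdef_permutation)

lemma orb_self: "permutation s \<Longrightarrow> a \<in> orbit s a"
  by (rule permutation_self_in_orbit)

lemma orb_eq: "permutation s \<Longrightarrow> b \<in> orbit s a \<Longrightarrow> orbit s b = orbit s a"
  by (rule orbit_cyclic_eq3[OF cyclic_on_orbit'])

lemma orb_stable: assumes "s ` A \<subseteq> A" "a \<in> A" shows "orbit s a \<subseteq> A"
proof
  fix y assume "y \<in> orbit s a" then show "y \<in> A"
    by induct (use assms in auto)
qed

lemma orb_finite: "permutation s \<Longrightarrow> finite (orbit s a)"
  by (rule finite_orbit[OF orb_self])

lemma orb_card_pos: "permutation s \<Longrightarrow> card (orbit s a) > 0"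
  using orb_finite orb_self by (metis card_gt_0_iff empty_iff)

lemma orb_disj:
  assumes "permutation s" "orbit s a \<noteq> orbit s b" shows "orbit s a \<inter> orbit s b = {}"
proof (rule ccontr)
  assume "orbit s a \<inter> orbit s b \<noteq> {}"
  then obtain x where "x \<in> orbit s a" "x \<in> orbit s b" by blast
  then show False using orb_eq[OF assms(1)] assms(2) by metis
qed

lemma orb_step: "permutation s \<Longrightarrow> orbit s (s a) = orbit s a"
  by (rule permutation_orbit_step)

lemma orb_period:
  fixes f :: "'a \<Rightarrow> 'a" and b :: 'a
  assumes "permutation f"
  defines "p \<equiv> card (orbit f b)"
  shows "0 < p" "(f ^^ p) b = b" "\<And>a c. (f ^^ a) b = (f ^^ c) b \<longleftrightarrow> a mod p = c mod p"
    "orbit f b = (\<lambda>k. (f ^^ k) b) ` {..<p}"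
proof -
  have self: "b \<in> orbit f b" using orb_self[OF assms(1)] .
  have eq: "orbit f b = (\<lambda>n. (f ^^ n) b) ` {0..<funpow_dist1 f b b}"
    by (rule orbit_conv_funpow_dist1[OF self])
  have inj: "inj_on (\<lambda>n. (f ^^ n) b) {0..<funpow_dist1 f b b}"
    by (rule inj_on_funpow_dist1[OF self])
  have pdef: "p = funpow_dist1 f b b" unfolding p_def eq using card_image[OF inj] by simp
  show "0 < p" unfolding pdef by simp
  show per: "(f ^^ p) b = b" unfolding pdef by (rule funpow_dist1_prop[OF self])
  show "orbit f b = (\<lambda>k. (f ^^ k) b) ` {..<p}" using eq pdef by (simp add: atLeast0LessThan)
  fix a c
  show "(f ^^ a) b = (f ^^ c) b \<longleftrightarrow> a mod p = c mod p"
  proof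
    assume "(f ^^ a) b = (f ^^ c) b"
    then have "(f ^^ (a mod p)) b = (f ^^ (c mod p)) b" using funpow_mod_eq[OF per] by simp
    moreover have "a mod p \<in> {0..<funpow_dist1 f b b}" "c mod p \<in> {0..<funpow_dist1 f b b}"
      using pdef \<open>0 < p\<close> by auto
    ultimately show "a mod p = c mod p" using inj by (auto dest: inj_onD)
  next
    assume "a mod p = c mod p"
    then show "(f ^^ a) b = (f ^^ c) b" using funpow_mod_eq[OF per] by metis
  qed
qed

lemma funpow_dist_in_orbit:
  assumes "permutation f" "x \<in> orbit f b"
  shows "(f ^^ funpow_dist f b x) b = x"
  using funpow_dist_prop[OF assms(2)] .

lemma orbit_transfer:
  fixes s s' :: "'a \<Rightarrow> 'a" and b b' :: 'a
  assumes s: "permutation s" and s': "permutation s'"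
    and card: "card (orbit s b) = card (orbit s' b')"
  defines "r \<equiv> (\<lambda>x. (s' ^^ funpow_dist s b x) b')"
  shows "bij_betw r (orbit s b) (orbit s' b')"
    "\<And>x. x \<in> orbit s b \<Longrightarrow> r (s x) = s' (r x)"
proof -
  define p where "p = card (orbit s b)"
  have P: "\<And>a c. (s ^^ a) b = (s ^^ c) b \<longleftrightarrow> a mod p = c mod p"
    using orb_period(3)[OF s] p_def by blast
  have P': "\<And>a c. (s' ^^ a) b' = (s' ^^ c) b' \<longleftrightarrow> a mod p = c mod p"
    using orb_period(3)[OF s'] p_def card by metis
  have D: "x \<in> orbit s b \<Longrightarrow> (s ^^ funpow_dist s b x) b = x" for x
    by (rule funpow_dist_prop)
  have into: "r x \<in> orbit s' b'" for x
    unfolding r_def by (rule funpow_in_orbit[OF orb_self[OF s']])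
  show comm: "r (s x) = s' (r x)" if x: "x \<in> orbit s b" for x
  proof -
    have sx: "s x \<in> orbit s b" using x by (rule orbit.step)
    have "(s ^^ funpow_dist s b (s x)) b = (s ^^ Suc (funpow_dist s b x)) b"
      using D[OF sx] D[OF x] by simp
    then have "funpow_dist s b (s x) mod p = Suc (funpow_dist s b x) mod p" using P by blast
    then have "(s' ^^ funpow_dist s b (s x)) b' = (s' ^^ Suc (funpow_dist s b x)) b'" using P' by blast
    then show ?thesis unfolding r_def by simp
  qed
  have inj: "inj_on r (orbit s b)"
  proof (rule inj_onI)
    fix x y assume x: "x \<in> orbit s b" and y: "y \<in> orbit s b" and eq: "r x = r y"
    then have "funpow_dist s b x mod p = funpow_dist s b y mod p" using P' unfolding r_def by blast
    then have "(s ^^ funpow_dist s b x) b = (s ^^ funpow_dist s b y) b" using P by blast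
    then show "x = y" using D[OF x] D[OF y] by simp
  qed
  have "r ` orbit s b = orbit s' b'"
    using into inj card orb_finite[OF s'] by (intro card_subset_eq) (auto simp: card_image)
  then show "bij_betw r (orbit s b) (orbit s' b')" using inj by (simp add: bij_betw_def)
qed

section \<open>Conjugacy of stable subsets with the same cycle type\<close>

definition orbs :: "(nat \<Rightarrow> nat) \<Rightarrow> nat set \<Rightarrow> nat set set" where
  "orbs s A = {orbit s a | a. a \<in> A}"

definition cnt :: "(nat \<Rightarrow> nat) \<Rightarrow> nat set \<Rightarrow> nat \<Rightarrow> nat" where
  "cnt s A j = card {Q \<in> orbs s A. card Q = j}"

lemma orbs_finite: "finite A \<Longrightarrow> finite (orbs s A)"
  unfolding orbs_def by simp

lemma conj_stable:
  assumes s: "permutation s" and s': "permutation s'"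
    and A: "finite A" "s ` A \<subseteq> A" and A': "finite A'" "s' ` A' \<subseteq> A'"
    and c: "\<And>j. cnt s A j = cnt s' A' j"
  shows "\<exists>r. bij_betw r A A' \<and> (\<forall>x\<in>A. r (s x) = s' (r x))"
proof -
  define C where "C j = {Q \<in> orbs s A. card Q = j}" for j
  define C' where "C' j = {Q \<in> orbs s' A'. card Q = j}" for j
  have "\<exists>g. bij_betw g (C j) (C' j)" for j
    using c[of j] orbs_finite[OF A(1)] orbs_finite[OF A'(1)]
    unfolding cnt_def C_def C'_def by (intro finite_same_card_bij) auto
  then obtain gj where gj: "\<And>j. bij_betw (gj j) (C j) (C' j)" by metis
  define g where "g Q = gj (card Q) Q" for Q
  have g_in: "Q \<in> orbs s A \<Longrightarrow> g Q \<in> orbs s' A' \<and> card (g Q) = card Q" for Q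
    using gj[of "card Q"] unfolding g_def C_def C'_def bij_betw_def by auto
  have g_inj: "O1 \<in> orbs s A \<Longrightarrow> O2 \<in> orbs s A \<Longrightarrow> g O1 = g O2 \<Longrightarrow> O1 = O2" for O1 O2
  proof -
    assume o: "O1 \<in> orbs s A" "O2 \<in> orbs s A" "g O1 = g O2"
    then have "card O1 = card O2" using g_in by metis
    then show "O1 = O2" using o gj[of "card O1"] unfolding g_def C_def bij_betw_def inj_on_def by auto
  qed
  have g_surj: "O' \<in> orbs s' A' \<Longrightarrow> \<exists>Q\<in>orbs s A. g Q = O'" for O'
  proof -
    assume o: "O' \<in> orbs s' A'"
    then have "O' \<in> C' (card O')" unfolding C'_def by simp
    then obtain Q where Q: "Q \<in> C (card O')" "gj (card O') Q = O'" using gj[of "card O'"]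
      unfolding bij_betw_def by (metis imageE)
    then have "Q \<in> orbs s A" "card Q = card O'" unfolding C_def by auto
    then have "Q \<in> orbs s A \<and> g Q = O'" using Q(2) unfolding g_def by simp
    then show ?thesis by blast
  qed
  define base where "base Q = (SOME b. b \<in> Q)" for Q :: "nat set"
  have base: "Q \<in> orbs s A \<Longrightarrow> base Q \<in> Q \<and> orbit s (base Q) = Q" for Q
  proof -
    assume "Q \<in> orbs s A"
    then obtain a where a: "Q = orbit s a" unfolding orbs_def by blast
    then have "a \<in> Q" using orb_self[OF s] by simp
    then have b: "base Q \<in> Q" unfolding base_def by (rule someI)
    then show ?thesis using orb_eq[OF s] a by simp
  qed
  have base': "Q \<in> orbs s' A' \<Longrightarrow> base Q \<in> Q \<and> orbit s' (base Q) = Q" for Q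
  proof -
    assume "Q \<in> orbs s' A'"
    then obtain a where a: "Q = orbit s' a" unfolding orbs_def by blast
    then have "a \<in> Q" using orb_self[OF s'] by simp
    then have b: "base Q \<in> Q" unfolding base_def by (rule someI)
    then show ?thesis using orb_eq[OF s'] a by simp
  qed
  define r where "r x = (s' ^^ funpow_dist s (base (orbit s x)) x) (base (g (orbit s x)))" for x
  have oA: "x \<in> A \<Longrightarrow> orbit s x \<in> orbs s A" for x unfolding orbs_def by blast
  have loc: "bij_betw (\<lambda>x. (s' ^^ funpow_dist s (base Q) x) (base (g Q))) Q (g Q)
     \<and> (\<forall>x\<in>Q. (s' ^^ funpow_dist s (base Q) (s x)) (base (g Q)) = s' ((s' ^^ funpow_dist s (base Q) x) (base (g Q))))"
    if Q: "Q \<in> orbs s A" for Q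
  proof -
    have 1: "orbit s (base Q) = Q" using base[OF Q] by simp
    have 2: "orbit s' (base (g Q)) = g Q" using base'[of "g Q"] g_in[OF Q] by simp
    have 3: "card (orbit s (base Q)) = card (orbit s' (base (g Q)))" using 1 2 g_in[OF Q] by simp
    show ?thesis using orbit_transfer[OF s s' 3] unfolding 1 2 by simp
  qed
  have r_loc: "x \<in> Q \<Longrightarrow> Q \<in> orbs s A \<Longrightarrow> r x = (s' ^^ funpow_dist s (base Q) x) (base (g Q))" for x Q
  proof -
    assume x: "x \<in> Q" and Q: "Q \<in> orbs s A"
    then obtain a where "Q = orbit s a" unfolding orbs_def by blast
    then have "orbit s x = Q" using orb_eq[OF s] x by blast
    then show ?thesis unfolding r_def by simp
  qed
  have OsA: "x \<in> A \<Longrightarrow> x \<in> orbit s x" for x using orb_self[OF s] .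
  have sub: "Q \<in> orbs s A \<Longrightarrow> Q \<subseteq> A" for Q unfolding orbs_def using orb_stable[OF A(2)] by blast
  have sub': "Q \<in> orbs s' A' \<Longrightarrow> Q \<subseteq> A'" for Q unfolding orbs_def using orb_stable[OF A'(2)] by blast
  have comm: "\<forall>x\<in>A. r (s x) = s' (r x)"
  proof
    fix x assume x: "x \<in> A"
    have sx: "s x \<in> orbit s x" by (rule orbit.base)
    show "r (s x) = s' (r x)"
      using r_loc[OF sx oA[OF x]] r_loc[OF OsA[OF x] oA[OF x]] loc[OF oA[OF x]] OsA[OF x] by simp
  qed
  have r_into: "x \<in> A \<Longrightarrow> r x \<in> g (orbit s x)" for x
  proof -
    assume x: "x \<in> A"
    have 1: "r x = (s' ^^ funpow_dist s (base (orbit s x)) x) (base (g (orbit s x)))"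
      using r_loc[OF OsA[OF x] oA[OF x]] .
    have 2: "(\<lambda>z. (s' ^^ funpow_dist s (base (orbit s x)) z) (base (g (orbit s x)))) ` orbit s x = g (orbit s x)"
      using loc[OF oA[OF x]] unfolding bij_betw_def by blast
    show ?thesis using 1 2 OsA[OF x] by blast
  qed
  have inj: "inj_on r A"
  proof (rule inj_onI)
    fix x y assume x: "x \<in> A" and y: "y \<in> A" and eq: "r x = r y"
    have "g (orbit s x) \<inter> g (orbit s y) \<noteq> {}" using r_into[OF x] r_into[OF y] eq by auto
    moreover have "g (orbit s x) \<in> orbs s' A'" "g (orbit s y) \<in> orbs s' A'" using g_in oA x y by auto
    ultimately have "g (orbit s x) = g (orbit s y)"
    proof -
      assume ne: "g (orbit s x) \<inter> g (orbit s y) \<noteq> {}" and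
        m: "g (orbit s x) \<in> orbs s' A'" "g (orbit s y) \<in> orbs s' A'"
      obtain a1 a2 where "g (orbit s x) = orbit s' a1" "g (orbit s y) = orbit s' a2"
        using m unfolding orbs_def by blast
      then show ?thesis using ne orb_disj[OF s', of a1 a2] by auto
    qed
    then have o: "orbit s x = orbit s y" using g_inj oA x y by blast
    have "y \<in> orbit s x" using o OsA[OF y] by simp
    have lx: "r x = (s' ^^ funpow_dist s (base (orbit s x)) x) (base (g (orbit s x)))"
      using r_loc[OF OsA[OF x] oA[OF x]] .
    have ly: "r y = (s' ^^ funpow_dist s (base (orbit s x)) y) (base (g (orbit s x)))"
      using r_loc[OF \<open>y \<in> orbit s x\<close> oA[OF x]] .
    have "inj_on (\<lambda>z. (s' ^^ funpow_dist s (base (orbit s x)) z) (base (g (orbit s x)))) (orbit s x)"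
      using loc[OF oA[OF x]] unfolding bij_betw_def by blast
    then show "x = y" using inj_onD lx ly eq OsA[OF x] \<open>y \<in> orbit s x\<close> by fastforce
  qed
  have surj: "r ` A = A'"
  proof
    show "r ` A \<subseteq> A'"
    proof
      fix y assume "y \<in> r ` A"
      then obtain x where x: "x \<in> A" "y = r x" by blast
      have "g (orbit s x) \<in> orbs s' A'" using g_in[OF oA[OF x(1)]] by blast
      then show "y \<in> A'" using sub' r_into[OF x(1)] x(2) by blast
    qed
    show "A' \<subseteq> r ` A"
    proof
      fix y assume y: "y \<in> A'"
      have "orbit s' y \<in> orbs s' A'" using y unfolding orbs_def by blast
      then obtain Q where Q: "Q \<in> orbs s A" "g Q = orbit s' y" using g_surj by blast
      have "y \<in> g Q" using Q orb_self[OF s'] by simp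
      then have "y \<in> (\<lambda>x. (s' ^^ funpow_dist s (base Q) x) (base (g Q))) ` Q"
        using loc[OF Q(1)] unfolding bij_betw_def by simp
      then obtain x where x: "x \<in> Q" "(s' ^^ funpow_dist s (base Q) x) (base (g Q)) = y"
        by blast
      have "r x = y" using r_loc[OF x(1) Q(1)] x(2) by simp
      moreover have "x \<in> A" using sub[OF Q(1)] x(1) by blast
      ultimately show "y \<in> r ` A" by blast
    qed
  qed
  show ?thesis using inj surj comm unfolding bij_betw_def by blast
qed



section \<open>Counting families by type\<close>

lemma count_families:
  fixes \<kappa> :: "'a \<Rightarrow> nat" and c :: "nat \<Rightarrow> nat"
  assumes \<Omega>: "finite \<Omega>" and J: "finite J" and c: "\<And>j. j \<notin> J \<Longrightarrow> c j = 0"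
  shows "card {C. C \<subseteq> \<Omega> \<and> (\<forall>j. card {x\<in>C. \<kappa> x = j} = c j)} =
    (\<Prod>j\<in>J. card {x\<in>\<Omega>. \<kappa> x = j} choose c j)"
proof -
  define L where "L = {C. C \<subseteq> \<Omega> \<and> (\<forall>j. card {x\<in>C. \<kappa> x = j} = c j)}"
  define R where "R = (\<Pi>\<^sub>E j\<in>J. {D. D \<subseteq> {x\<in>\<Omega>. \<kappa> x = j} \<and> card D = c j})"
  define \<phi> where "\<phi> C = restrict (\<lambda>j. {x\<in>C. \<kappa> x = j}) J" for C
  have memJ: "C \<in> L \<Longrightarrow> x \<in> C \<Longrightarrow> \<kappa> x \<in> J" for C x
  proof (rule ccontr)
    assume C: "C \<in> L" and x: "x \<in> C" and n: "\<kappa> x \<notin> J"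
    have fin: "finite {y\<in>C. \<kappa> y = \<kappa> x}" using C \<Omega> unfolding L_def by (auto intro: finite_subset)
    have "card {y\<in>C. \<kappa> y = \<kappa> x} = 0" using C c[OF n] unfolding L_def by auto
    then have "{y\<in>C. \<kappa> y = \<kappa> x} = {}" using fin by simp
    then show False using x by auto
  qed
  have bij: "bij_betw \<phi> L R"
    unfolding bij_betw_def
  proof (intro conjI)
    show "inj_on \<phi> L"
    proof (rule inj_onI)
      fix C1 C2 assume C1: "C1 \<in> L" and C2: "C2 \<in> L" and eq: "\<phi> C1 = \<phi> C2"
      have *: "{x\<in>C1. \<kappa> x = j} = {x\<in>C2. \<kappa> x = j}" if "j \<in> J" for j
        using fun_cong[OF eq, of j] that unfolding \<phi>_def by simp
      show "C1 = C2"
      proof (intro set_eqI iffI)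
        fix x assume "x \<in> C1" then show "x \<in> C2" using *[OF memJ[OF C1]] by blast
      next
        fix x assume "x \<in> C2" then show "x \<in> C1" using *[OF memJ[OF C2]] by blast
      qed
    qed
    show "\<phi> ` L = R"
    proof
      show "\<phi> ` L \<subseteq> R"
        unfolding \<phi>_def L_def R_def by auto
      show "R \<subseteq> \<phi> ` L"
      proof
        fix \<Phi> assume \<Phi>: "\<Phi> \<in> R"
        define C where "C = (\<Union>j\<in>J. \<Phi> j)"
        have sub: "\<Phi> j \<subseteq> {x\<in>\<Omega>. \<kappa> x = j}" if "j \<in> J" for j using \<Phi> that unfolding R_def by auto
        have slice: "{x\<in>C. \<kappa> x = j} = (if j \<in> J then \<Phi> j else {})" for j
          unfolding C_def using sub by auto
        have "C \<in> L"
          unfolding L_def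
        proof (intro CollectI conjI allI)
          show "C \<subseteq> \<Omega>" unfolding C_def using sub by auto
          fix j show "card {x\<in>C. \<kappa> x = j} = c j"
            using \<Phi> c unfolding slice R_def by auto
        qed
        moreover have "\<phi> C = \<Phi>"
          using \<Phi> unfolding \<phi>_def R_def by (auto simp: slice PiE_def extensional_def restrict_def fun_eq_iff)
        ultimately show "\<Phi> \<in> \<phi> ` L" by blast
      qed
    qed
  qed
  have "card L = card R" using bij_betw_same_card[OF bij] .
  also have "card R = (\<Prod>j\<in>J. card {D. D \<subseteq> {x\<in>\<Omega>. \<kappa> x = j} \<and> card D = c j})"
    unfolding R_def using J by (rule card_PiE)
  also have "\<dots> = (\<Prod>j\<in>J. card {x\<in>\<Omega>. \<kappa> x = j} choose c j)"
    using \<Omega> by (intro prod.cong refl n_subsets) auto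
  finally show ?thesis unfolding L_def .
qed

section \<open>Stable subsets of one permutation\<close>

lemma stable_union_orbs:
  assumes "permutation s" "s ` A \<subseteq> A"
  shows "\<Union> (orbs s A) = A"
  using orb_stable[OF assms(2)] orb_self[OF assms(1)] unfolding orbs_def by blast

lemma orbs_union:
  assumes s: "permutation s" and C: "C \<subseteq> orbs s S"
  shows "orbs s (\<Union>C) = C"
proof
  show "orbs s (\<Union>C) \<subseteq> C"
  proof
    fix Q assume "Q \<in> orbs s (\<Union>C)"
    then obtain x Q0 where x: "Q = orbit s x" "x \<in> Q0" "Q0 \<in> C" unfolding orbs_def by blast
    then obtain a where "Q0 = orbit s a" using C unfolding orbs_def by blast
    then have "Q = Q0" using x orb_eq[OF s] by blast
    then show "Q \<in> C" using x by simp
  qed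
  show "C \<subseteq> orbs s (\<Union>C)"
  proof
    fix Q assume Q: "Q \<in> C"
    then obtain a where a: "Q = orbit s a" using C unfolding orbs_def by blast
    then have "a \<in> \<Union>C" using Q orb_self[OF s] by blast
    then show "Q \<in> orbs s (\<Union>C)" using a unfolding orbs_def by blast
  qed
qed

lemma union_stable:
  assumes "C \<subseteq> orbs s S" shows "s ` (\<Union>C) \<subseteq> \<Union>C"
  using assms unfolding orbs_def by (auto intro: orbit.step orbit.base)

lemma count_stable:
  assumes s: "s permutes {..<n}" and c: "\<And>j. j \<notin> J \<Longrightarrow> c j = 0" and J: "finite J"
  shows "card {A. A \<subseteq> {..<n} \<and> s ` A \<subseteq> A \<and> (\<forall>j. cnt s A j = c j)} =
     (\<Prod>j\<in>J. num_cycles n s j choose c j)"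
proof -
  have ps: "permutation s" using s by (auto simp: permutation_permutes)
  define \<Omega> where "\<Omega> = orbs s {..<n}"
  have fO: "finite \<Omega>" unfolding \<Omega>_def by (simp add: orbs_finite)
  define L where "L = {A. A \<subseteq> {..<n} \<and> s ` A \<subseteq> A \<and> (\<forall>j. cnt s A j = c j)}"
  define R where "R = {C. C \<subseteq> \<Omega> \<and> (\<forall>j. card {x\<in>C. card x = j} = c j)}"
  have orbs_sub: "A \<subseteq> {..<n} \<Longrightarrow> orbs s A \<subseteq> \<Omega>" for A unfolding \<Omega>_def orbs_def by blast
  have bij: "bij_betw (orbs s) L R"
  proof (rule bij_betw_byWitness[where f' = Union])
    show "\<forall>A\<in>L. \<Union> (orbs s A) = A" unfolding L_def using stable_union_orbs[OF ps] by blast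
    show "\<forall>C\<in>R. orbs s (\<Union>C) = C" unfolding R_def \<Omega>_def using orbs_union[OF ps] by blast
    show "orbs s ` L \<subseteq> R" unfolding L_def R_def cnt_def using orbs_sub by auto
    show "Union ` R \<subseteq> L"
    proof
      fix A assume "A \<in> Union ` R"
      then obtain C where C: "C \<in> R" "A = \<Union>C" by blast
      have sub: "C \<subseteq> orbs s {..<n}" using C unfolding R_def \<Omega>_def by blast
      have "A \<subseteq> {..<n}" using sub C(2) permutes_orbit_subset[OF s] unfolding orbs_def by blast
      moreover have "s ` A \<subseteq> A" using union_stable[OF sub] C(2) by simp
      moreover have "cnt s A j = c j" for j
        using C orbs_union[OF ps sub] unfolding cnt_def R_def by simp
      ultimately show "A \<in> L" unfolding L_def by blast
    qed
  qed
  have "card L = card R" using bij_betw_same_card[OF bij] .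
  also have "card R = (\<Prod>j\<in>J. card {x\<in>\<Omega>. card x = j} choose c j)"
    unfolding R_def by (rule count_families[OF fO J c])
  also have "\<dots> = (\<Prod>j\<in>J. num_cycles n s j choose c j)"
  proof (intro prod.cong refl)
    fix j
    have "{x\<in>\<Omega>. card x = j} = {orbit_of s a | a. a < n \<and> card (orbit_of s a) = j}"
      unfolding \<Omega>_def orbs_def using orbit_of_eq[OF ps] by auto
    then show "card {x\<in>\<Omega>. card x = j} choose c j = num_cycles n s j choose c j"
      unfolding num_cycles_def by simp
  qed
  finally show ?thesis unfolding L_def .
qed

definition sl :: "(nat \<times> nat) set \<Rightarrow> nat \<Rightarrow> nat set" where
  "sl T i = {a. (i, a) \<in> T}"

definition ctype :: "nat \<Rightarrow> (nat \<Rightarrow> nat \<Rightarrow> nat) \<Rightarrow> (nat \<times> nat) set \<Rightarrow> nat \<times> nat \<Rightarrow> nat" where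
  "ctype m \<sigma> T = (\<lambda>(i, j). if i < m then cnt (\<sigma> i) (sl T i) j else 0)"

lemma sl_sub: "T \<subseteq> elems m d \<Longrightarrow> i < m \<Longrightarrow> sl T i \<subseteq> {..<d i}"
  unfolding sl_def elems_def by auto

lemma stable_sl:
  assumes "T \<subseteq> elems m d"
  shows "pf \<sigma> ` T \<subseteq> T \<longleftrightarrow> (\<forall>i<m. \<sigma> i ` sl T i \<subseteq> sl T i)"
  using assms unfolding sl_def elems_def by (auto simp: image_subset_iff)

lemma Sd_perm: "\<sigma> \<in> Sd m d \<Longrightarrow> i < m \<Longrightarrow> \<sigma> i permutes {..<d i}"
  unfolding Sd_def by blast

lemma Sd_permutation: "\<sigma> \<in> Sd m d \<Longrightarrow> i < m \<Longrightarrow> permutation (\<sigma> i)"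
  using Sd_perm permutation_permutes by blast

lemma count_multi:
  assumes \<sigma>: "\<sigma> \<in> Sd m d" and J: "finite J"
    and c: "\<And>i j. (i, j) \<notin> {..<m} \<times> J \<Longrightarrow> c (i, j) = 0"
  shows "card {T. T \<subseteq> elems m d \<and> pf \<sigma> ` T \<subseteq> T \<and> ctype m \<sigma> T = c} =
     (\<Prod>v\<in>{..<m} \<times> J. X_var d \<sigma> v choose c v)"
proof -
  define L where "L = {T. T \<subseteq> elems m d \<and> pf \<sigma> ` T \<subseteq> T \<and> ctype m \<sigma> T = c}"
  define B where "B i = {A. A \<subseteq> {..<d i} \<and> \<sigma> i ` A \<subseteq> A \<and> (\<forall>j. cnt (\<sigma> i) A j = c (i, j))}" for i
  define R where "R = (\<Pi>\<^sub>E i\<in>{..<m}. B i)"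
  define \<phi> where "\<phi> T = restrict (sl T) {..<m}" for T
  define \<psi> where "\<psi> \<Phi> = {(i, a). i < m \<and> a \<in> \<Phi> i}" for \<Phi> :: "nat \<Rightarrow> nat set"
  have ct: "ctype m \<sigma> T = c \<longleftrightarrow> (\<forall>i<m. \<forall>j. cnt (\<sigma> i) (sl T i) j = c (i, j))" for T
  proof
    assume "ctype m \<sigma> T = c" then show "\<forall>i<m. \<forall>j. cnt (\<sigma> i) (sl T i) j = c (i, j)"
      unfolding ctype_def by (auto dest: fun_cong[where x="(_, _)"])
  next
    assume *: "\<forall>i<m. \<forall>j. cnt (\<sigma> i) (sl T i) j = c (i, j)"
    show "ctype m \<sigma> T = c"
    proof
      fix v show "ctype m \<sigma> T v = c v"
        using * c by (cases v) (auto simp: ctype_def)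
    qed
  qed
  have bij: "bij_betw \<phi> L R"
  proof (rule bij_betw_byWitness[where f' = \<psi>])
    show "\<forall>T\<in>L. \<psi> (\<phi> T) = T"
      unfolding L_def \<psi>_def \<phi>_def sl_def elems_def by auto
    show "\<forall>\<Phi>\<in>R. \<phi> (\<psi> \<Phi>) = \<Phi>"
      unfolding R_def \<psi>_def \<phi>_def sl_def by (auto simp: PiE_def extensional_def fun_eq_iff)
    show "\<phi> ` L \<subseteq> R"
    proof
      fix \<Phi> assume "\<Phi> \<in> \<phi> ` L"
      then obtain T where T: "T \<in> L" "\<Phi> = \<phi> T" by blast
      have TL: "T \<subseteq> elems m d" "pf \<sigma> ` T \<subseteq> T" "ctype m \<sigma> T = c" using T(1) unfolding L_def by auto
      have "sl T i \<in> B i" if i: "i < m" for i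
      proof -
        have "sl T i \<subseteq> {..<d i}" using sl_sub[OF TL(1) i] .
        moreover have "\<sigma> i ` sl T i \<subseteq> sl T i" using stable_sl[OF TL(1)] TL(2) i by blast
        moreover have "\<forall>j. cnt (\<sigma> i) (sl T i) j = c (i, j)" using ct TL(3) i by blast
        ultimately show ?thesis unfolding B_def by blast
      qed
      then show "\<Phi> \<in> R" unfolding R_def T(2) \<phi>_def by auto
    qed
    show "\<psi> ` R \<subseteq> L"
    proof
      fix T assume "T \<in> \<psi> ` R"
      then obtain \<Phi> where \<Phi>: "\<Phi> \<in> R" "T = \<psi> \<Phi>" by blast
      have slT: "i < m \<Longrightarrow> sl T i = \<Phi> i" for i unfolding \<Phi>(2) \<psi>_def sl_def by auto
      have Bi: "i < m \<Longrightarrow> \<Phi> i \<in> B i" for i using \<Phi>(1) unfolding R_def by auto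
      have sub: "T \<subseteq> elems m d"
        using Bi unfolding \<Phi>(2) \<psi>_def elems_def B_def by auto
      moreover have "pf \<sigma> ` T \<subseteq> T"
        using stable_sl[OF sub] slT Bi unfolding B_def by auto
      moreover have "ctype m \<sigma> T = c"
        unfolding ct using slT Bi unfolding B_def by auto
      ultimately show "T \<in> L" unfolding L_def by blast
    qed
  qed
  have "card L = card R" using bij_betw_same_card[OF bij] .
  also have "card R = (\<Prod>i<m. card (B i))" unfolding R_def by (rule card_PiE) simp
  also have "\<dots> = (\<Prod>i<m. \<Prod>j\<in>J. num_cycles (d i) (\<sigma> i) j choose c (i, j))"
    unfolding B_def using Sd_perm[OF \<sigma>] c J
    by (intro prod.cong refl count_stable) auto
  also have "\<dots> = (\<Prod>v\<in>{..<m} \<times> J. X_var d \<sigma> v choose c v)"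
    unfolding X_var_def by (simp add: prod.cartesian_product case_prod_beta)
  finally show ?thesis unfolding L_def .
qed

lemma conj_multi:
  assumes \<sigma>: "\<sigma> \<in> Sd m d" and \<sigma>': "\<sigma>' \<in> Sd m d'"
    and T: "T \<subseteq> elems m d" and T': "T' \<subseteq> elems m d'"
    and st: "pf \<sigma> ` T \<subseteq> T" and st': "pf \<sigma>' ` T' \<subseteq> T'"
    and ct: "ctype m \<sigma> T = ctype m \<sigma>' T'"
  shows "\<exists>\<rho>. bij_betw \<rho> T T' \<and> (\<forall>x\<in>T. fst (\<rho> x) = fst x) \<and> (\<forall>x\<in>T. \<rho> (pf \<sigma> x) = pf \<sigma>' (\<rho> x))"
proof -
  have "\<forall>i\<in>{..<m}. \<exists>r. bij_betw r (sl T i) (sl T' i) \<and> (\<forall>x\<in>sl T i. r (\<sigma> i x) = \<sigma>' i (r x))"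
  proof
    fix i assume "i \<in> {..<m}"
    then have i: "i < m" by simp
    have c: "cnt (\<sigma> i) (sl T i) j = cnt (\<sigma>' i) (sl T' i) j" for j
      using fun_cong[OF ct, of "(i, j)"] i unfolding ctype_def by simp
    show "\<exists>r. bij_betw r (sl T i) (sl T' i) \<and> (\<forall>x\<in>sl T i. r (\<sigma> i x) = \<sigma>' i (r x))"
      using i stable_sl[OF T] stable_sl[OF T'] st st' c
      by (intro conj_stable Sd_permutation[OF \<sigma>] Sd_permutation[OF \<sigma>'])
         (auto intro: finite_subset[OF sl_sub[OF T]] finite_subset[OF sl_sub[OF T']])
  qed
  then obtain R where R: "\<And>i. i < m \<Longrightarrow> bij_betw (R i) (sl T i) (sl T' i) \<and> (\<forall>x\<in>sl T i. R i (\<sigma> i x) = \<sigma>' i (R i x))"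
    by (metis lessThan_iff)
  define \<rho> where "\<rho> = (\<lambda>(i, a). (i, R i a))"
  have memT: "(i, a) \<in> T \<longleftrightarrow> i < m \<and> a \<in> sl T i" for i a using T unfolding sl_def elems_def by auto
  have memT': "(i, a) \<in> T' \<longleftrightarrow> i < m \<and> a \<in> sl T' i" for i a using T' unfolding sl_def elems_def by auto
  have inj: "inj_on \<rho> T"
  proof (rule inj_onI)
    fix x y assume x: "x \<in> T" and y: "y \<in> T" and eq: "\<rho> x = \<rho> y"
    obtain i a j b where xy: "x = (i, a)" "y = (j, b)" by fastforce
    then have "i = j" "R i a = R i b" using eq unfolding \<rho>_def by auto
    moreover have "i < m" "a \<in> sl T i" "b \<in> sl T i" using x y xy memT \<open>i = j\<close> by auto
    ultimately show "x = y" using R[of i] xy unfolding bij_betw_def inj_on_def by auto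
  qed
  have img: "\<rho> ` T = T'"
  proof
    show "\<rho> ` T \<subseteq> T'"
    proof
      fix y assume "y \<in> \<rho> ` T"
      then obtain i a where "(i, a) \<in> T" "y = (i, R i a)" unfolding \<rho>_def by auto
      then show "y \<in> T'" using R memT memT' unfolding bij_betw_def by auto
    qed
    show "T' \<subseteq> \<rho> ` T"
    proof
      fix y assume y: "y \<in> T'"
      obtain i b where yi: "y = (i, b)" by fastforce
      then have i: "i < m" "b \<in> sl T' i" using y memT' by auto
      have "b \<in> R i ` sl T i" using R[OF i(1)] i(2) unfolding bij_betw_def by simp
      then obtain a where "a \<in> sl T i" "R i a = b" by blast
      then have "(i, a) \<in> T" "\<rho> (i, a) = y" using i memT yi unfolding \<rho>_def by auto
      then show "y \<in> \<rho> ` T" by force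
    qed
  qed
  have comm: "\<forall>x\<in>T. \<rho> (pf \<sigma> x) = pf \<sigma>' (\<rho> x)"
  proof
    fix x assume x: "x \<in> T"
    obtain i a where xi: "x = (i, a)" by fastforce
    then have "i < m" "a \<in> sl T i" using x memT by auto
    then show "\<rho> (pf \<sigma> x) = pf \<sigma>' (\<rho> x)" using R xi unfolding \<rho>_def by auto
  qed
  have "\<forall>x\<in>T. fst (\<rho> x) = fst x" unfolding \<rho>_def by auto
  then show ?thesis using inj img comm unfolding bij_betw_def by blast
qed



definition vars :: "nat \<Rightarrow> (nat \<times> nat) set" where
  "vars m = {(i, j). i < m \<and> 1 \<le> j}"

definition mon :: "((nat \<times> nat) \<Rightarrow>\<^sub>0 nat) \<Rightarrow> (nat \<Rightarrow> nat) \<Rightarrow> (nat \<Rightarrow> nat \<Rightarrow> nat) \<Rightarrow> 'k::comm_ring_1" where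
  "mon mn d \<sigma> = (\<Prod>v\<in>Poly_Mapping.keys mn. of_nat (X_var d \<sigma> v) ^ Poly_Mapping.lookup mn v)"

definition repr :: "nat \<Rightarrow> ((nat \<Rightarrow> nat) \<Rightarrow> (nat \<Rightarrow> nat \<Rightarrow> nat) \<Rightarrow> 'k::comm_ring_1) \<Rightarrow> bool" where
  "repr m f \<longleftrightarrow> (\<exists>P :: ((nat \<times> nat) \<Rightarrow>\<^sub>0 nat) \<Rightarrow>\<^sub>0 'k. is_charpoly m P \<and> (\<forall>d \<sigma>. eval_charpoly P d \<sigma> = f d \<sigma>))"

lemma eval_mon: "eval_charpoly P d \<sigma> = (\<Sum>mn\<in>Poly_Mapping.keys P. Poly_Mapping.lookup P mn * mon mn d \<sigma>)"
  unfolding eval_charpoly_def mon_def ..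

lemma eval_super:
  assumes "finite K" "Poly_Mapping.keys P \<subseteq> K"
  shows "eval_charpoly P d \<sigma> = (\<Sum>mn\<in>K. Poly_Mapping.lookup P mn * mon mn d \<sigma>)"
  unfolding eval_mon using assms
  by (intro sum.mono_neutral_left) (auto simp: in_keys_iff)

lemma mon_super:
  assumes "finite K" "Poly_Mapping.keys mn \<subseteq> K"
  shows "mon mn d \<sigma> = (\<Prod>v\<in>K. (of_nat (X_var d \<sigma> v) :: 'k::comm_ring_1) ^ Poly_Mapping.lookup mn v)"
  unfolding mon_def using assms
  by (intro prod.mono_neutral_left) (auto simp: in_keys_iff)

lemma mon_add: "(mon (a + b) d \<sigma> :: 'k::comm_ring_1) = mon a d \<sigma> * mon b d \<sigma>"
proof -
  define K where "K = Poly_Mapping.keys a \<union> Poly_Mapping.keys b"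
  have fK: "finite K" unfolding K_def by simp
  have "mon (a + b) d \<sigma> = (\<Prod>v\<in>K. (of_nat (X_var d \<sigma> v) :: 'k) ^ Poly_Mapping.lookup (a + b) v)"
    using keys_add[of a b] by (intro mon_super[OF fK]) (auto simp: K_def)
  also have "\<dots> = (\<Prod>v\<in>K. (of_nat (X_var d \<sigma> v) :: 'k) ^ Poly_Mapping.lookup a v) *
     (\<Prod>v\<in>K. (of_nat (X_var d \<sigma> v) :: 'k) ^ Poly_Mapping.lookup b v)"
    by (simp add: lookup_add power_add prod.distrib)
  also have "\<dots> = mon a d \<sigma> * mon b d \<sigma>"
  proof -
    have "mon a d \<sigma> = (\<Prod>v\<in>K. (of_nat (X_var d \<sigma> v) :: 'k) ^ Poly_Mapping.lookup a v)"
      by (rule mon_super[OF fK]) (auto simp: K_def)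
    moreover have "mon b d \<sigma> = (\<Prod>v\<in>K. (of_nat (X_var d \<sigma> v) :: 'k) ^ Poly_Mapping.lookup b v)"
      by (rule mon_super[OF fK]) (auto simp: K_def)
    ultimately show ?thesis by simp
  qed
  finally show ?thesis .
qed

lemma repr_zero: "repr m (\<lambda>d \<sigma>. 0)"
  unfolding repr_def is_charpoly_def eval_charpoly_def by (intro exI[of _ 0]) simp

lemma repr_add:
  assumes "repr m f" "repr m g" shows "repr m (\<lambda>d \<sigma>. f d \<sigma> + g d \<sigma>)"
proof -
  obtain P where P: "is_charpoly m P" "\<And>d \<sigma>. eval_charpoly P d \<sigma> = f d \<sigma>" using assms(1) unfolding repr_def by blast
  obtain Q where Q: "is_charpoly m Q" "\<And>d \<sigma>. eval_charpoly Q d \<sigma> = g d \<sigma>" using assms(2) unfolding repr_def by blast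
  define K where "K = Poly_Mapping.keys P \<union> Poly_Mapping.keys Q"
  have fK: "finite K" unfolding K_def by simp
  have ch: "is_charpoly m (P + Q)" using P(1) Q(1) keys_add[of P Q] unfolding is_charpoly_def by blast
  have "eval_charpoly (P + Q) d \<sigma> = f d \<sigma> + g d \<sigma>" for d \<sigma>
  proof -
    have "eval_charpoly (P + Q) d \<sigma> = (\<Sum>mn\<in>K. Poly_Mapping.lookup (P + Q) mn * mon mn d \<sigma>)"
      using keys_add[of P Q] by (intro eval_super[OF fK]) (auto simp: K_def)
    also have "\<dots> = (\<Sum>mn\<in>K. Poly_Mapping.lookup P mn * mon mn d \<sigma>) + (\<Sum>mn\<in>K. Poly_Mapping.lookup Q mn * mon mn d \<sigma>)"
      by (simp add: lookup_add distrib_right sum.distrib)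
    also have "\<dots> = eval_charpoly P d \<sigma> + eval_charpoly Q d \<sigma>"
    proof -
      have "eval_charpoly P d \<sigma> = (\<Sum>mn\<in>K. Poly_Mapping.lookup P mn * mon mn d \<sigma>)"
        by (rule eval_super[OF fK]) (auto simp: K_def)
      moreover have "eval_charpoly Q d \<sigma> = (\<Sum>mn\<in>K. Poly_Mapping.lookup Q mn * mon mn d \<sigma>)"
        by (rule eval_super[OF fK]) (auto simp: K_def)
      ultimately show ?thesis by simp
    qed
    finally show ?thesis using P(2) Q(2) by simp
  qed
  then show ?thesis using ch unfolding repr_def by blast
qed

lemma repr_single:
  assumes "Poly_Mapping.keys mn \<subseteq> vars m"
  shows "repr m (\<lambda>d \<sigma>. c * mon mn d \<sigma>)"
proof -
  have ch: "is_charpoly m (Poly_Mapping.single mn c)"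
    using assms unfolding is_charpoly_def vars_def by auto
  have "eval_charpoly (Poly_Mapping.single mn c) d \<sigma> = c * mon mn d \<sigma>" for d \<sigma>
    by (subst eval_super[of "{mn}"]) auto
  then show ?thesis using ch unfolding repr_def by blast
qed

lemma repr_sum:
  assumes "\<And>i. i \<in> I \<Longrightarrow> repr m (f i)"
  shows "repr m (\<lambda>d \<sigma>. \<Sum>i\<in>I. f i d \<sigma>)"
  using assms
proof (induction I rule: infinite_finite_induct)
  case (infinite A) then show ?case using repr_zero by simp
next
  case empty then show ?case using repr_zero by simp
next
  case (insert a A)
  then have "repr m (\<lambda>d \<sigma>. f a d \<sigma> + (\<Sum>i\<in>A. f i d \<sigma>))" by (intro repr_add) auto
  then show ?case using insert by simp
qed

lemma repr_cong: "repr m f \<Longrightarrow> (\<And>d \<sigma>. f d \<sigma> = g d \<sigma>) \<Longrightarrow> repr m g"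
  unfolding repr_def by simp

lemma repr_mult:
  assumes "repr m f" "repr m g" shows "repr m (\<lambda>d \<sigma>. f d \<sigma> * g d \<sigma>)"
proof -
  obtain P where P: "is_charpoly m P" "\<And>d \<sigma>. eval_charpoly P d \<sigma> = f d \<sigma>" using assms(1) unfolding repr_def by blast
  obtain Q where Q: "is_charpoly m Q" "\<And>d \<sigma>. eval_charpoly Q d \<sigma> = g d \<sigma>" using assms(2) unfolding repr_def by blast
  have eq: "f d \<sigma> * g d \<sigma> = (\<Sum>a\<in>Poly_Mapping.keys P. \<Sum>b\<in>Poly_Mapping.keys Q.
      (Poly_Mapping.lookup P a * Poly_Mapping.lookup Q b) * mon (a + b) d \<sigma>)" for d \<sigma>
    unfolding P(2)[symmetric] Q(2)[symmetric] eval_mon sum_product mon_add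
    by (intro sum.cong refl) (simp add: ac_simps)
  have "repr m (\<lambda>d \<sigma>. \<Sum>a\<in>Poly_Mapping.keys P. \<Sum>b\<in>Poly_Mapping.keys Q.
      (Poly_Mapping.lookup P a * Poly_Mapping.lookup Q b) * mon (a + b) d \<sigma>)"
  proof (intro repr_sum repr_single)
    fix a b assume a: "a \<in> Poly_Mapping.keys P" and b: "b \<in> Poly_Mapping.keys Q"
    show "Poly_Mapping.keys (a + b) \<subseteq> vars m"
      using keys_add[of a b] P(1) Q(1) a b unfolding is_charpoly_def vars_def by blast
  qed
  then show ?thesis by (rule repr_cong) (simp add: eq)
qed

lemma repr_const: "repr m (\<lambda>d \<sigma>. c)"
  using repr_single[of 0 m c] by (simp add: mon_def)

lemma repr_var:
  assumes "v \<in> vars m" shows "repr m (\<lambda>d \<sigma>. of_nat (X_var d \<sigma> v))"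
  using repr_single[of "Poly_Mapping.single v 1" m 1] assms by (simp add: mon_def)

lemma repr_prod:
  assumes "\<And>i. i \<in> I \<Longrightarrow> repr m (f i)"
  shows "repr m (\<lambda>d \<sigma>. \<Prod>i\<in>I. f i d \<sigma>)"
  using assms
proof (induction I rule: infinite_finite_induct)
  case (infinite A) then show ?case using repr_const by simp
next
  case empty then show ?case using repr_const by simp
next
  case (insert a A)
  then have "repr m (\<lambda>d \<sigma>. f a d \<sigma> * (\<Prod>i\<in>A. f i d \<sigma>))" by (intro repr_mult) auto
  then show ?case using insert by simp
qed

lemma repr_binom:
  assumes "v \<in> vars m"
  shows "repr m (\<lambda>d \<sigma>. (of_nat (X_var d \<sigma> v choose n) :: 'k::field_char_0))"
proof -
  have "repr m (\<lambda>d \<sigma>. (inverse (fact n) :: 'k) * (\<Prod>i\<in>{0..<n}. of_nat (X_var d \<sigma> v) + (- of_nat i)))"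
    by (intro repr_mult repr_const repr_prod repr_add repr_var assms)
  then show ?thesis
    by (rule repr_cong) (simp add: binomial_gbinomial gbinomial_prod_rev field_simps)
qed



lemma card_disjoint_family_le:
  assumes A: "finite A" and sub: "\<And>Q. Q \<in> \<F> \<Longrightarrow> Q \<subseteq> A \<and> Q \<noteq> {}"
    and disj: "\<And>Q1 Q2. Q1 \<in> \<F> \<Longrightarrow> Q2 \<in> \<F> \<Longrightarrow> Q1 \<noteq> Q2 \<Longrightarrow> Q1 \<inter> Q2 = {}"
  shows "card \<F> \<le> card A"
proof -
  define pick where "pick Q = (SOME x. x \<in> Q)" for Q :: "'a set"
  have pick: "pick Q \<in> Q" if Q: "Q \<in> \<F>" for Q
  proof -
    obtain x where "x \<in> Q" using sub[OF Q] by blast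
    then show ?thesis unfolding pick_def by (rule someI)
  qed
  have "inj_on pick \<F>"
  proof (rule inj_onI)
    fix Q1 Q2 assume q: "Q1 \<in> \<F>" "Q2 \<in> \<F>" "pick Q1 = pick Q2"
    show "Q1 = Q2"
    proof (rule ccontr)
      assume "Q1 \<noteq> Q2"
      then have "Q1 \<inter> Q2 = {}" using disj q by blast
      moreover have "pick Q1 \<in> Q1 \<inter> Q2" using pick[OF q(1)] pick[OF q(2)] q(3) by simp
      ultimately show False by simp
    qed
  qed
  moreover have "pick ` \<F> \<subseteq> A" using pick sub by blast
  ultimately show ?thesis using A by (rule card_inj_on_le)
qed

lemma card_sl_le: assumes "finite T" shows "card (sl T i) \<le> card T"
proof -
  have "inj_on (\<lambda>a. (i, a)) (sl T i)" by (rule inj_onI) simp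
  moreover have "(\<lambda>a. (i, a)) ` sl T i \<subseteq> T" unfolding sl_def by blast
  ultimately show ?thesis using assms by (rule card_inj_on_le)
qed

context FIM
begin

definition valid :: "(nat \<Rightarrow> nat) \<Rightarrow> (nat \<Rightarrow> nat \<Rightarrow> nat) \<Rightarrow> (nat \<times> nat) set \<Rightarrow> bool" where
  "valid d \<sigma> T \<longleftrightarrow> d \<in> objs m \<and> \<sigma> \<in> Sd m d \<and> T \<subseteq> elems m d \<and> pf \<sigma> ` T = T"

definition G :: "(nat \<Rightarrow> nat) \<Rightarrow> (nat \<Rightarrow> nat \<Rightarrow> nat) \<Rightarrow> (nat \<times> nat) set \<Rightarrow> 'k" where
  "G d \<sigma> T = trd d (Pi d \<sigma> \<circ> pT d T)"

lemma G_inv: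
  assumes "valid d \<sigma> T" "valid d' \<sigma>' T'" "ctype m \<sigma> T = ctype m \<sigma>' T'"
  shows "G d \<sigma> T = G d' \<sigma>' T'"
proof -
  have v: "d \<in> objs m" "\<sigma> \<in> Sd m d" "T \<subseteq> elems m d" "pf \<sigma> ` T = T" using assms(1) unfolding valid_def by auto
  have v': "d' \<in> objs m" "\<sigma>' \<in> Sd m d'" "T' \<subseteq> elems m d'" "pf \<sigma>' ` T' = T'" using assms(2) unfolding valid_def by auto
  obtain \<rho> where \<rho>: "bij_betw \<rho> T T'" "\<forall>x\<in>T. fst (\<rho> x) = fst x" "\<forall>x\<in>T. \<rho> (pf \<sigma> x) = pf \<sigma>' (\<rho> x)"
    using conj_multi[OF v(2) v'(2) v(3) v'(3) _ _ assms(3)] v(4) v'(4) by auto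
  show ?thesis unfolding G_def
    by (rule cross[OF v(1) v'(1) v(2) v'(2) v(3) v'(3) v(4) \<rho>(1)]) (use \<rho> in auto)
qed

definition h :: "(nat \<times> nat \<Rightarrow> nat) \<Rightarrow> 'k" where
  "h c = (if \<exists>t. valid (fst t) (fst (snd t)) (snd (snd t)) \<and> ctype m (fst (snd t)) (snd (snd t)) = c
          then (let t = SOME t. valid (fst t) (fst (snd t)) (snd (snd t)) \<and> ctype m (fst (snd t)) (snd (snd t)) = c
                in G (fst t) (fst (snd t)) (snd (snd t)))
          else 0)"

lemma h_eq: assumes "valid d \<sigma> T" shows "h (ctype m \<sigma> T) = G d \<sigma> T"
proof -
  let ?P = "\<lambda>t. valid (fst t) (fst (snd t)) (snd (snd t)) \<and> ctype m (fst (snd t)) (snd (snd t)) = ctype m \<sigma> T"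
  have ex: "\<exists>t. ?P t" using assms by (intro exI[of _ "(d, \<sigma>, T)"]) simp
  then have "?P (SOME t. ?P t)" by (rule someI_ex)
  then have "G (fst (SOME t. ?P t)) (fst (snd (SOME t. ?P t))) (snd (snd (SOME t. ?P t))) = G d \<sigma> T"
    using G_inv assms by blast
  then show ?thesis unfolding h_def using ex by (simp add: Let_def)
qed

definition Jb :: "nat set" where "Jb = {1..Nb}"
definition Ib :: "(nat \<times> nat) set" where "Ib = {..<m} \<times> Jb"
definition Box :: "(nat \<times> nat \<Rightarrow> nat) set" where
  "Box = {c. \<forall>v. c v \<le> Nb \<and> (v \<notin> Ib \<longrightarrow> c v = 0)}"

lemma Box_finite: "finite Box"
proof -
  have "Box \<subseteq> (\<lambda>g v. if v \<in> Ib then g v else 0) ` (\<Pi>\<^sub>E v\<in>Ib. {..Nb})"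
  proof
    fix c assume c: "c \<in> Box"
    have "c = (\<lambda>v. if v \<in> Ib then restrict c Ib v else 0)"
      using c unfolding Box_def by (auto simp: fun_eq_iff)
    moreover have "restrict c Ib \<in> (\<Pi>\<^sub>E v\<in>Ib. {..Nb})" using c unfolding Box_def by auto
    ultimately show "c \<in> (\<lambda>g v. if v \<in> Ib then g v else 0) ` (\<Pi>\<^sub>E v\<in>Ib. {..Nb})" by blast
  qed
  moreover have "finite Ib" unfolding Ib_def Jb_def by simp
  ultimately show ?thesis by (rule finite_subset[OF _ finite_imageI[OF finite_PiE]]) auto
qed

lemma ctype_Box:
  assumes v: "valid d \<sigma> T" and small: "card T \<le> Nb"
  shows "ctype m \<sigma> T \<in> Box"
proof -
  have d: "d \<in> objs m" and \<sigma>: "\<sigma> \<in> Sd m d" and T: "T \<subseteq> elems m d" and st: "pf \<sigma> ` T = T"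
    using v unfolding valid_def by auto
  have fT: "finite T" using T finite_T by blast
  have bound: "cnt (\<sigma> i) (sl T i) j \<le> Nb \<and> (j \<notin> Jb \<longrightarrow> cnt (\<sigma> i) (sl T i) j = 0)" if i: "i < m" for i j
  proof -
    have ps: "permutation (\<sigma> i)" using Sd_permutation[OF \<sigma> i] .
    have stab: "\<sigma> i ` sl T i \<subseteq> sl T i" using stable_sl[OF T] st i by blast
    have fsl: "finite (sl T i)" using finite_subset[OF sl_sub[OF T i]] by simp
    define \<F> where "\<F> = {Q \<in> orbs (\<sigma> i) (sl T i). card Q = j}"
    have Fsub: "Q \<in> \<F> \<Longrightarrow> Q \<subseteq> sl T i \<and> Q \<noteq> {}" for Q
      unfolding \<F>_def orbs_def using orb_stable[OF stab] orb_self[OF ps] by blast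
    have "card \<F> \<le> card (sl T i)"
    proof (rule card_disjoint_family_le[OF fsl])
      show "\<And>Q. Q \<in> \<F> \<Longrightarrow> Q \<subseteq> sl T i \<and> Q \<noteq> {}" using Fsub .
      fix Q1 Q2 assume "Q1 \<in> \<F>" "Q2 \<in> \<F>" "Q1 \<noteq> Q2"
      then obtain a1 a2 where "Q1 = orbit (\<sigma> i) a1" "Q2 = orbit (\<sigma> i) a2" unfolding \<F>_def orbs_def by blast
      then show "Q1 \<inter> Q2 = {}" using orb_disj[OF ps] \<open>Q1 \<noteq> Q2\<close> by blast
    qed
    also have "\<dots> \<le> card T" using card_sl_le[OF fT] .
    finally have le: "cnt (\<sigma> i) (sl T i) j \<le> Nb" unfolding cnt_def \<F>_def[symmetric] using small by simp
    have e: "\<F> = {}" if j: "j \<notin> Jb"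
    proof (rule ccontr)
      assume "\<F> \<noteq> {}"
      then obtain Q where Q: "Q \<in> \<F>" by blast
      then have "card Q = j" unfolding \<F>_def by simp
      have Qs: "Q \<subseteq> sl T i" "Q \<noteq> {}" using Fsub[OF Q] by auto
      have fQ: "finite Q" using Qs(1) fsl by (rule finite_subset)
      have "0 < card Q" using fQ Qs(2) by (simp add: card_gt_0_iff)
      then have "1 \<le> j" using \<open>card Q = j\<close> by simp
      moreover have "j \<le> card (sl T i)" using card_mono[OF fsl Qs(1)] \<open>card Q = j\<close> by simp
      ultimately have "1 \<le> j" "j \<le> card (sl T i)" by auto
      then have "j \<in> Jb" using card_sl_le[OF fT, of i] small unfolding Jb_def by simp
      then show False using j by simp
    qed
    have "cnt (\<sigma> i) (sl T i) j = card \<F>" unfolding cnt_def \<F>_def ..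
    then show ?thesis using le e by auto
  qed
  show ?thesis
    unfolding Box_def
  proof (intro CollectI allI)
    fix v :: "nat \<times> nat"
    obtain i j where vij: "v = (i, j)" by fastforce
    show "ctype m \<sigma> T v \<le> Nb \<and> (v \<notin> Ib \<longrightarrow> ctype m \<sigma> T v = 0)"
      using bound[of i j] unfolding vij ctype_def Ib_def by auto
  qed
qed

lemma h_zero: assumes "c \<notin> Box" shows "h c = 0"
proof (cases "\<exists>t. valid (fst t) (fst (snd t)) (snd (snd t)) \<and> ctype m (fst (snd t)) (snd (snd t)) = c")
  case True
  then obtain d \<sigma> T where v: "valid d \<sigma> T" and c: "ctype m \<sigma> T = c" by auto
  have "h c = G d \<sigma> T" using h_eq[OF v] c by simp
  also have "\<dots> = 0"
  proof (cases "Nb < card T")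
    case True
    then show ?thesis unfolding G_def using v unfolding valid_def by (intro vanish_tr) auto
  next
    case False
    then have "c \<in> Box" using ctype_Box[OF v] c by simp
    then show ?thesis using assms by simp
  qed
  finally show ?thesis .
next
  case False
  show ?thesis by (subst h_def) (rule if_not_P[OF False])
qed

lemma char_formula:
  assumes d: "d \<in> objs m" and \<sigma>: "\<sigma> \<in> Sd m d"
  shows "character scale m V F d \<sigma> =
    (\<Sum>c\<in>Box. h c * (\<Prod>v\<in>Ib. of_nat (X_var d \<sigma> v choose c v)))"
proof -
  define E where "E = elems m d"
  define S where "S = {T \<in> Pow E. pf \<sigma> ` T = T}"
  have fE: "finite E" unfolding E_def by (rule finite_elems)
  have fS: "finite S" unfolding S_def using fE by simp
  have "character scale m V F d \<sigma> = trd d (Pi d \<sigma>)" unfolding character_def Pi_def ..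
  also have "\<dots> = (\<Sum>T\<in>Pow E. G d \<sigma> T)" unfolding G_def E_def by (rule char_split[OF d \<sigma>])
  also have "\<dots> = (\<Sum>T\<in>Pow E. if pf \<sigma> ` T = T then h (ctype m \<sigma> T) else 0)"
  proof (intro sum.cong refl)
    fix T assume T: "T \<in> Pow E"
    show "G d \<sigma> T = (if pf \<sigma> ` T = T then h (ctype m \<sigma> T) else 0)"
    proof (cases "pf \<sigma> ` T = T")
      case True
      then have "valid d \<sigma> T" using d \<sigma> T unfolding valid_def E_def by auto
      then show ?thesis using h_eq True by simp
    next
      case False
      then show ?thesis unfolding G_def using nonstable_zero[OF d \<sigma>] T unfolding E_def by auto
    qed
  qed
  also have "\<dots> = (\<Sum>T\<in>S. h (ctype m \<sigma> T))"
    unfolding S_def using fE by (simp add: sum.inter_filter[symmetric])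
  also have "\<dots> = (\<Sum>T\<in>S. \<Sum>c\<in>Box. if ctype m \<sigma> T = c then h c else 0)"
  proof (intro sum.cong refl)
    fix T assume "T \<in> S"
    show "h (ctype m \<sigma> T) = (\<Sum>c\<in>Box. if ctype m \<sigma> T = c then h c else 0)"
    proof (cases "ctype m \<sigma> T \<in> Box")
      case True
      then show ?thesis using Box_finite by (simp add: sum.delta)
    next
      case False
      then show ?thesis using h_zero by (auto intro!: sum.neutral)
    qed
  qed
  also have "\<dots> = (\<Sum>c\<in>Box. \<Sum>T\<in>S. if ctype m \<sigma> T = c then h c else 0)"
    by (rule sum.swap)
  also have "\<dots> = (\<Sum>c\<in>Box. h c * of_nat (card {T \<in> S. ctype m \<sigma> T = c}))"
  proof (intro sum.cong refl)
    fix c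
    have "(\<Sum>T\<in>S. if ctype m \<sigma> T = c then h c else 0) = (\<Sum>T\<in>{T \<in> S. ctype m \<sigma> T = c}. h c)"
      by (rule sum.inter_filter[symmetric, OF fS])
    also have "\<dots> = h c * of_nat (card {T \<in> S. ctype m \<sigma> T = c})" by (simp add: mult.commute)
    finally show "(\<Sum>T\<in>S. if ctype m \<sigma> T = c then h c else 0) = h c * of_nat (card {T \<in> S. ctype m \<sigma> T = c})" .
  qed
  also have "\<dots> = (\<Sum>c\<in>Box. h c * (\<Prod>v\<in>Ib. of_nat (X_var d \<sigma> v choose c v)))"
  proof (intro sum.cong refl)
    fix c assume c: "c \<in> Box"
    have "{T \<in> S. ctype m \<sigma> T = c} = {T. T \<subseteq> elems m d \<and> pf \<sigma> ` T \<subseteq> T \<and> ctype m \<sigma> T = c}"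
    proof -
      have "pf \<sigma> ` T = T \<longleftrightarrow> pf \<sigma> ` T \<subseteq> T" if T: "T \<subseteq> elems m d" for T
      proof
        assume sub: "pf \<sigma> ` T \<subseteq> T"
        have "finite T" using T finite_T by blast
        moreover have "card (pf \<sigma> ` T) = card T"
          using pf_inj[OF \<sigma>] T by (intro card_image) (auto intro: inj_on_subset)
        ultimately show "pf \<sigma> ` T = T" using sub by (simp add: card_subset_eq)
      qed simp
      then show ?thesis unfolding S_def E_def by auto
    qed
    moreover have "card {T. T \<subseteq> elems m d \<and> pf \<sigma> ` T \<subseteq> T \<and> ctype m \<sigma> T = c} =
        (\<Prod>v\<in>{..<m} \<times> Jb. X_var d \<sigma> v choose c v)"
      using c unfolding Box_def Ib_def by (intro count_multi[OF \<sigma>]) (auto simp: Jb_def)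
    ultimately show "h c * of_nat (card {T \<in> S. ctype m \<sigma> T = c}) = h c * (\<Prod>v\<in>Ib. of_nat (X_var d \<sigma> v choose c v))"
      unfolding Ib_def by simp
  qed
  finally show ?thesis .
qed

end

theorem proposition2p3:
  fixes scale :: "'k::field_char_0 \<Rightarrow> 'v::ab_group_add \<Rightarrow> 'v"
    and m :: nat
    and V :: "(nat \<Rightarrow> nat) \<Rightarrow> 'v set"
    and F :: "(nat \<Rightarrow> nat) \<Rightarrow> (nat \<Rightarrow> nat) \<Rightarrow> ((nat \<times> nat) \<rightharpoonup> (nat \<times> nat)) \<Rightarrow> 'v \<Rightarrow> 'v"
  assumes "FIsharp_module scale m V F"
    and "finitely_generated scale m V F"
  shows "\<exists>P :: ((nat \<times> nat) \<Rightarrow>\<^sub>0 nat) \<Rightarrow>\<^sub>0 'k. is_charpoly m P \<and>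
           (\<forall>d\<in>objs m. \<forall>\<sigma>\<in>Sd m d. character scale m V F d \<sigma> = eval_charpoly P d \<sigma>)"
proof -
  have vs: "vector_space scale" using assms(1) unfolding FIsharp_module_def by blast
  interpret FIM scale m V F
    by (intro FIM.intro vs FIM_axioms.intro assms)
  have "repr m (\<lambda>d \<sigma>. \<Sum>c\<in>Box. h c * (\<Prod>v\<in>Ib. (of_nat (X_var d \<sigma> v choose c v) :: 'k)))"
    by (intro repr_sum repr_mult repr_const repr_prod repr_binom) (auto simp: Ib_def Jb_def vars_def)
  then obtain P :: "((nat \<times> nat) \<Rightarrow>\<^sub>0 nat) \<Rightarrow>\<^sub>0 'k" where P: "is_charpoly m P"
    "\<And>d \<sigma>. eval_charpoly P d \<sigma> = (\<Sum>c\<in>Box. h c * (\<Prod>v\<in>Ib. (of_nat (X_var d \<sigma> v choose c v) :: 'k)))"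
    unfolding repr_def by blast
  show ?thesis using P char_formula by auto
qed



end
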